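(* Let $k$ be a field and let $I\subseteq k[x_0,\ldots,x_n]$ be a homogeneous ideal of dimension $d\ge0$. Then \[h_I(m)=\binom{m+d+1}{d+1}-\binom{m-\deg I+d+1}{d+1}\qquad\text{for all } m\ge1\] if and only if there exist linearly independent linear forms $u_1,\ldots,u_{n-d-1}\in k[x_0,\ldots,x_n]$ and a homogeneous polynomial $f\notin(u_1,\ldots,u_{n-d-1})$ such that $I=(u_1,\ldots,u_{n-d-1},f)$.
   Context: The dimension of a homogeneous ideal is the dimension of the projective variety it defines in $\mathbb P^n(\bar k)$. $h_I(m):=\dim_k(k[x_0,\ldots,x_n]/I)_m$. If $I$ has dimension $d\ge0$ and Hilbert polynomial with leading term $a_dt^d$, then $\deg I:=d!\,a_d$. Binomial coefficients $\binom{a}{b}$ with integer $a<b$ are taken to be $0$. *)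

theory Defs
  imports "HOL-Library.Poly_Mapping" "HOL-Computational_Algebra.Polynomial"
begin

(* Polynomials in the variables x_0,...,x_n over a coefficient type 'a:
   monomials are finitely supported exponent vectors nat =>0 nat,
   polynomials are finitely supported coefficient functions on monomials. *)
type_synonym 'a mpoly = "(nat \<Rightarrow>\<^sub>0 nat) \<Rightarrow>\<^sub>0 'a"

definition mon_deg :: "(nat \<Rightarrow>\<^sub>0 nat) \<Rightarrow> nat" where
  "mon_deg mon = (\<Sum>i\<in>Poly_Mapping.keys mon. Poly_Mapping.lookup mon i)"

definition polys :: "nat \<Rightarrow> ('a::zero) mpoly set" where
  "polys n = {p. \<forall>mon\<in>Poly_Mapping.keys p. Poly_Mapping.keys mon \<subseteq> {..n}}"

definition mconst :: "'a::zero \<Rightarrow> 'a mpoly" where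
  "mconst c = Poly_Mapping.single 0 c"

definition msmult :: "'a::comm_ring_1 \<Rightarrow> 'a mpoly \<Rightarrow> 'a mpoly" where
  "msmult c p = mconst c * p"

(* homogeneous of degree m (the zero polynomial is homogeneous of every degree) *)
definition homog_of_deg :: "nat \<Rightarrow> ('a::zero) mpoly \<Rightarrow> bool" where
  "homog_of_deg m p \<longleftrightarrow> (\<forall>mon\<in>Poly_Mapping.keys p. mon_deg mon = m)"

definition homogeneous :: "('a::zero) mpoly \<Rightarrow> bool" where
  "homogeneous p \<longleftrightarrow> (\<exists>m. homog_of_deg m p)"

definition hcomp :: "nat \<Rightarrow> ('a::zero) mpoly \<Rightarrow> 'a mpoly" where
  "hcomp m p = Abs_poly_mapping (\<lambda>mon. if mon_deg mon = m then Poly_Mapping.lookup p mon else 0)"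

definition graded_part :: "nat \<Rightarrow> nat \<Rightarrow> ('a::zero) mpoly set" where
  "graded_part n m = {p \<in> polys n. homog_of_deg m p}"

definition is_ideal :: "nat \<Rightarrow> ('a::comm_ring_1) mpoly set \<Rightarrow> bool" where
  "is_ideal n I \<longleftrightarrow> I \<subseteq> polys n \<and> 0 \<in> I \<and> (\<forall>p\<in>I. \<forall>q\<in>I. p + q \<in> I)
     \<and> (\<forall>p\<in>polys n. \<forall>q\<in>I. p * q \<in> I)"

definition gen_ideal :: "nat \<Rightarrow> ('a::comm_ring_1) mpoly set \<Rightarrow> 'a mpoly set" where
  "gen_ideal n S = \<Inter>{J. is_ideal n J \<and> S \<subseteq> J}"

definition homogeneous_ideal :: "nat \<Rightarrow> ('a::comm_ring_1) mpoly set \<Rightarrow> bool" where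
  "homogeneous_ideal n I \<longleftrightarrow> is_ideal n I \<and> (\<forall>p\<in>I. \<forall>m. hcomp m p \<in> I)"

(* Hilbert function h_I(m) = dim_k (k[x_0..x_n]/I)_m = dim_k R_m - dim_k I_m *)
definition hilbert_fun :: "nat \<Rightarrow> ('a::field) mpoly set \<Rightarrow> nat \<Rightarrow> nat" where
  "hilbert_fun n I m =
     vector_space.dim (msmult :: 'a \<Rightarrow> 'a mpoly \<Rightarrow> 'a mpoly) (graded_part n m)
     - vector_space.dim (msmult :: 'a \<Rightarrow> 'a mpoly \<Rightarrow> 'a mpoly) (I \<inter> graded_part n m)"

definition hilbert_poly :: "nat \<Rightarrow> ('a::field) mpoly set \<Rightarrow> rat poly" where
  "hilbert_poly n I = (THE P. \<forall>\<^sub>F m in sequentially. of_nat (hilbert_fun n I m) = poly P (of_nat m))"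

definition ideal_degree :: "nat \<Rightarrow> ('a::field) mpoly set \<Rightarrow> nat \<Rightarrow> rat" where
  "ideal_degree n I d = of_nat (fact d) * coeff (hilbert_poly n I) d"

definition ibinom :: "rat \<Rightarrow> nat \<Rightarrow> rat" where
  "ibinom a b = (if a < of_nat b then 0 else a gchoose b)"

definition eval_mp :: "('a::zero \<Rightarrow> 'b::comm_semiring_1) \<Rightarrow> 'a mpoly \<Rightarrow> (nat \<Rightarrow> 'b) \<Rightarrow> 'b" where
  "eval_mp \<phi> p x = (\<Sum>mon\<in>Poly_Mapping.keys p. \<phi> (Poly_Mapping.lookup p mon) * (\<Prod>i\<in>Poly_Mapping.keys mon. x i ^ Poly_Mapping.lookup mon i))"

definition is_field_emb :: "('a::field \<Rightarrow> 'b::field) \<Rightarrow> bool" where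
  "is_field_emb \<phi> \<longleftrightarrow> (\<forall>a b. \<phi> (a + b) = \<phi> a + \<phi> b) \<and> (\<forall>a b. \<phi> (a * b) = \<phi> a * \<phi> b)
      \<and> \<phi> 1 = 1"

definition alg_closed :: "'b::field itself \<Rightarrow> bool" where
  "alg_closed _ \<longleftrightarrow> (\<forall>p :: 'b poly. degree p > 0 \<longrightarrow> (\<exists>x. poly p x = 0))"

definition is_alg_closure :: "('a::field \<Rightarrow> 'b::field) \<Rightarrow> bool" where
  "is_alg_closure \<phi> \<longleftrightarrow> is_field_emb \<phi> \<and> alg_closed TYPE('b)
     \<and> (\<forall>y. \<exists>p :: 'a poly. p \<noteq> 0 \<and> poly (map_poly \<phi> p) y = 0)"

(* points of P^n(K), represented by their nonzero homogeneous coordinate vectors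
   (all sets considered below are invariant under scaling) *)
definition proj_pts :: "nat \<Rightarrow> (nat \<Rightarrow> 'b::field) set" where
  "proj_pts n = {x. (\<forall>i>n. x i = 0) \<and> (\<exists>i\<le>n. x i \<noteq> 0)}"

definition zariski_closed :: "nat \<Rightarrow> (nat \<Rightarrow> 'b::field) set \<Rightarrow> bool" where
  "zariski_closed n Z \<longleftrightarrow> (\<exists>S :: 'b mpoly set. S \<subseteq> polys n \<and> (\<forall>q\<in>S. homogeneous q)
      \<and> Z = {x \<in> proj_pts n. \<forall>q\<in>S. eval_mp id q x = 0})"

definition zariski_irreducible :: "nat \<Rightarrow> (nat \<Rightarrow> 'b::field) set \<Rightarrow> bool" where
  "zariski_irreducible n Z \<longleftrightarrow> Z \<noteq> {} \<and>
     (\<forall>A B. zariski_closed n A \<longrightarrow> zariski_closed n B \<longrightarrow> Z \<subseteq> A \<union> B \<longrightarrow> Z \<subseteq> A \<or> Z \<subseteq> B)"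

definition proj_variety :: "nat \<Rightarrow> ('a::field \<Rightarrow> 'b::field) \<Rightarrow> 'a mpoly set \<Rightarrow> (nat \<Rightarrow> 'b) set" where
  "proj_variety n \<phi> I = {x \<in> proj_pts n. \<forall>p\<in>I. eval_mp \<phi> p x = 0}"

definition irred_chain :: "nat \<Rightarrow> (nat \<Rightarrow> 'b::field) set \<Rightarrow> nat \<Rightarrow> (nat \<Rightarrow> (nat \<Rightarrow> 'b) set) \<Rightarrow> bool" where
  "irred_chain n V l Z \<longleftrightarrow> (\<forall>i\<le>l. zariski_closed n (Z i) \<and> zariski_irreducible n (Z i) \<and> Z i \<subseteq> V)
     \<and> (\<forall>i<l. Z i \<subset> Z (Suc i))"

definition has_proj_dim :: "nat \<Rightarrow> ('a::field \<Rightarrow> 'b::field) \<Rightarrow> 'a mpoly set \<Rightarrow> nat \<Rightarrow> bool" where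
  "has_proj_dim n \<phi> I d \<longleftrightarrow>
     (\<exists>Z. irred_chain n (proj_variety n \<phi> I) d Z)
     \<and> (\<forall>l Z. irred_chain n (proj_variety n \<phi> I) l Z \<longrightarrow> l \<le> d)"

definition lin_indep_linear_forms :: "nat \<Rightarrow> nat \<Rightarrow> (nat \<Rightarrow> ('a::field) mpoly) \<Rightarrow> bool" where
  "lin_indep_linear_forms n r u \<longleftrightarrow> (\<forall>i<r. u i \<in> graded_part n 1)
     \<and> (\<forall>c :: nat \<Rightarrow> 'a. (\<Sum>i<r. msmult (c i) (u i)) = 0 \<longrightarrow> (\<forall>i<r. c i = 0))"

end

theory Submission
  imports Defs
begin


abbreviation lk where "lk \<equiv> Poly_Mapping.lookup"
abbreviation ks where "ks \<equiv> Poly_Mapping.keys"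
abbreviation sg where "sg \<equiv> Poly_Mapping.single"

lemma lookup_pmap: "lk (Poly_Mapping.map f p) k = (if lk p k = 0 then 0 else f (lk p k))"
  by transfer (simp add: when_def)

lemma lookup_msmult[simp]: "lk (msmult c p) m = c * lk p m"
  unfolding msmult_def mconst_def mult_map_scale_conv_mult[symmetric]
  by (simp add: lookup_pmap)

interpretation V: vector_space "msmult :: 'a::field \<Rightarrow> 'a mpoly \<Rightarrow> 'a mpoly"
  by unfold_locales (auto intro!: poly_mapping_eqI simp: algebra_simps lookup_add)


definition Xv :: "nat \<Rightarrow> ('a::comm_ring_1) mpoly" where
  "Xv i = sg (sg i 1) 1"

definition PQ :: "nat set \<Rightarrow> ('a::zero) mpoly set" where
  "PQ Q = {p. \<forall>mon\<in>ks p. ks mon \<subseteq> Q}"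

definition GQ :: "nat set \<Rightarrow> nat \<Rightarrow> ('a::zero) mpoly set" where
  "GQ Q m = {p \<in> PQ Q. homog_of_deg m p}"

lemma polys_PQ: "polys n = PQ {..n}"
  by (simp add: polys_def PQ_def)

lemma graded_GQ: "graded_part n m = GQ {..n} m"
  by (simp add: graded_part_def GQ_def polys_PQ)

lemma lookup_single': "lk (sg k v) k' = (if k = k' then v else 0)"
  by (simp add: lookup_single when_def)

lemma mon_deg_superset:
  assumes "finite A" "ks mon \<subseteq> A"
  shows "mon_deg mon = (\<Sum>i\<in>A. lk mon i)"
  unfolding mon_deg_def
  by (rule sum.mono_neutral_left) (use assms in \<open>auto simp: in_keys_iff\<close>)

lemma mon_deg_add: "mon_deg (a + b) = mon_deg a + mon_deg b"
proof -
  let ?A = "ks a \<union> ks b"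
  have "mon_deg (a + b) = (\<Sum>i\<in>?A. lk (a + b) i)"
    by (rule mon_deg_superset) (use keys_add[of a b] in auto)
  also have "\<dots> = (\<Sum>i\<in>?A. lk a i) + (\<Sum>i\<in>?A. lk b i)"
    by (simp add: lookup_add sum.distrib)
  also have "\<dots> = mon_deg a + mon_deg b"
    by (subst (1 2) mon_deg_superset[of ?A]) auto
  finally show ?thesis .
qed

lemma mon_deg_zero[simp]: "mon_deg 0 = 0"
  by (simp add: mon_deg_def)

lemma mon_deg_single[simp]: "mon_deg (sg i k) = k"
  by (simp add: mon_deg_def)

lemma mon_deg_0_iff: "mon_deg mon = 0 \<longleftrightarrow> mon = 0"
proof
  assume "mon_deg mon = 0"
  then have "\<forall>i\<in>ks mon. lk mon i = 0" unfolding mon_deg_def by simp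
  then show "mon = 0" by (intro poly_mapping_eqI) (metis in_keys_iff lookup_zero)
qed simp

lemma in_keys_sum: "x \<in> ks (sum f A) \<Longrightarrow> \<exists>a\<in>A. x \<in> ks (f a)"
  using keys_sum[of f A] by auto

lemma keys_msmult: "ks (msmult c p) \<subseteq> ks p"
  by (auto simp: in_keys_iff)

lemma keys_diff': "ks (p - q) \<subseteq> ks p \<union> ks q"
  by (auto simp: in_keys_iff lookup_minus)

lemma PQ_0[simp]: "0 \<in> PQ Q" by (simp add: PQ_def)
lemma PQ_add: "p \<in> PQ Q \<Longrightarrow> q \<in> PQ Q \<Longrightarrow> p + q \<in> PQ Q"
  unfolding PQ_def mem_Collect_eq using keys_add[of p q] by blast
lemma PQ_uminus: "p \<in> PQ Q \<Longrightarrow> - p \<in> (PQ Q :: ('a::comm_ring_1) mpoly set)"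
  unfolding PQ_def by simp
lemma PQ_diff: "p \<in> PQ Q \<Longrightarrow> q \<in> PQ Q \<Longrightarrow> p - q \<in> (PQ Q :: ('a::comm_ring_1) mpoly set)"
  unfolding PQ_def mem_Collect_eq using keys_diff'[of p q] by blast
lemma PQ_msmult: "p \<in> PQ Q \<Longrightarrow> msmult c p \<in> (PQ Q :: ('a::field) mpoly set)"
  unfolding PQ_def mem_Collect_eq using keys_msmult[of c p] by blast
lemma PQ_single: "ks mon \<subseteq> Q \<Longrightarrow> sg mon c \<in> PQ Q"
  unfolding PQ_def by auto
lemma PQ_sum: "(\<And>a. a \<in> A \<Longrightarrow> f a \<in> PQ Q) \<Longrightarrow> sum f A \<in> PQ Q"
  by (induction A rule: infinite_finite_induct) (auto intro: PQ_add)
lemma PQ_mult: "p \<in> PQ Q \<Longrightarrow> q \<in> PQ Q \<Longrightarrow> p * q \<in> (PQ Q :: ('a::comm_ring_1) mpoly set)"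
proof -
  assume p: "p \<in> PQ Q" and q: "q \<in> PQ Q"
  show ?thesis unfolding PQ_def mem_Collect_eq
  proof
    fix mon assume "mon \<in> ks (p * q)"
    then obtain a b where "mon = a + b" "a \<in> ks p" "b \<in> ks q" using keys_mult by blast
    then show "ks mon \<subseteq> Q" using p q keys_add[of a b] unfolding PQ_def by blast
  qed
qed
lemma PQ_1[simp]: "1 \<in> (PQ Q :: ('a::comm_ring_1) mpoly set)"
  unfolding PQ_def by simp
lemma PQ_power: "p \<in> PQ Q \<Longrightarrow> p ^ k \<in> (PQ Q :: ('a::comm_ring_1) mpoly set)"
  by (induction k) (auto intro: PQ_mult)
lemma PQ_prod: "(\<And>a. a \<in> A \<Longrightarrow> f a \<in> PQ Q) \<Longrightarrow> prod f A \<in> (PQ Q :: ('a::comm_ring_1) mpoly set)"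
  by (induction A rule: infinite_finite_induct) (auto intro: PQ_mult)
lemma PQ_mono: "Q \<subseteq> Q' \<Longrightarrow> PQ Q \<subseteq> PQ Q'"
  unfolding PQ_def by blast

lemma homog_0[simp]: "homog_of_deg m 0" by (simp add: homog_of_deg_def)
lemma homog_add: "homog_of_deg m p \<Longrightarrow> homog_of_deg m q \<Longrightarrow> homog_of_deg m (p + q)"
  unfolding homog_of_deg_def using keys_add[of p q] by blast
lemma homog_uminus: "homog_of_deg m p \<Longrightarrow> homog_of_deg m (- p :: ('a::comm_ring_1) mpoly)"
  unfolding homog_of_deg_def by simp
lemma homog_diff: "homog_of_deg m p \<Longrightarrow> homog_of_deg m q \<Longrightarrow> homog_of_deg m (p - q :: ('a::comm_ring_1) mpoly)"
  unfolding homog_of_deg_def using keys_diff'[of p q] by blast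
lemma homog_msmult: "homog_of_deg m p \<Longrightarrow> homog_of_deg m (msmult c p :: ('a::field) mpoly)"
  unfolding homog_of_deg_def using keys_msmult[of c p] by blast
lemma homog_single: "mon_deg mon = m \<Longrightarrow> homog_of_deg m (sg mon c)"
  unfolding homog_of_deg_def by auto
lemma homog_sum: "(\<And>a. a \<in> A \<Longrightarrow> homog_of_deg m (f a)) \<Longrightarrow> homog_of_deg m (sum f A)"
  by (induction A rule: infinite_finite_induct) (auto intro: homog_add)
lemma homog_mult: "homog_of_deg a p \<Longrightarrow> homog_of_deg b q \<Longrightarrow> homog_of_deg (a + b) (p * q :: ('a::comm_ring_1) mpoly)"
proof -
  assume p: "homog_of_deg a p" and q: "homog_of_deg b q"
  show ?thesis unfolding homog_of_deg_def
  proof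
    fix mon assume "mon \<in> ks (p * q)"
    then obtain x y where "mon = x + y" "x \<in> ks p" "y \<in> ks q" using keys_mult by blast
    then show "mon_deg mon = a + b" using p q by (simp add: homog_of_deg_def mon_deg_add)
  qed
qed
lemma homog_1[simp]: "homog_of_deg 0 (1 :: ('a::comm_ring_1) mpoly)"
  unfolding homog_of_deg_def by simp
lemma homog_power: assumes "homog_of_deg a p" shows "homog_of_deg (k * a) (p ^ k :: ('a::comm_ring_1) mpoly)"
proof (induction k)
  case 0 then show ?case by simp
next
  case (Suc k) then show ?case using homog_mult[OF assms Suc.IH] by (simp add: algebra_simps)
qed
lemma homog_prod: "finite A \<Longrightarrow> (\<And>x. x \<in> A \<Longrightarrow> homog_of_deg (g x) (f x)) \<Longrightarrow>
   homog_of_deg (\<Sum>x\<in>A. g x) (prod f A :: ('a::comm_ring_1) mpoly)"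
proof (induction A rule: finite_induct)
  case empty then show ?case by simp
next
  case (insert x F) then show ?case using homog_mult[of "g x" "f x" "sum g F" "prod f F"] by simp
qed

lemma GQ_0[simp]: "0 \<in> GQ Q m" by (simp add: GQ_def)
lemma GQ_add: "p \<in> GQ Q m \<Longrightarrow> q \<in> GQ Q m \<Longrightarrow> p + q \<in> GQ Q m"
  by (simp add: GQ_def PQ_add homog_add)
lemma GQ_diff: "p \<in> GQ Q m \<Longrightarrow> q \<in> GQ Q m \<Longrightarrow> p - q \<in> (GQ Q m :: ('a::comm_ring_1) mpoly set)"
  by (simp add: GQ_def PQ_diff homog_diff)
lemma GQ_msmult: "p \<in> GQ Q m \<Longrightarrow> msmult c p \<in> (GQ Q m :: ('a::field) mpoly set)"
  by (simp add: GQ_def PQ_msmult homog_msmult)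
lemma GQ_sum: "(\<And>a. a \<in> A \<Longrightarrow> f a \<in> GQ Q m) \<Longrightarrow> sum f A \<in> GQ Q m"
  by (simp add: GQ_def PQ_sum homog_sum)
lemma GQ_mult: "p \<in> GQ Q a \<Longrightarrow> q \<in> GQ Q b \<Longrightarrow> p * q \<in> (GQ Q (a + b) :: ('a::comm_ring_1) mpoly set)"
  by (simp add: GQ_def PQ_mult homog_mult)

lemma subspace_PQ: "V.subspace (PQ Q :: ('a::field) mpoly set)"
  by (simp add: V.subspace_def PQ_add PQ_msmult)
lemma subspace_GQ: "V.subspace (GQ Q m :: ('a::field) mpoly set)"
  by (simp add: V.subspace_def GQ_add GQ_msmult)

lemma mpoly_expand: "p = (\<Sum>mon\<in>ks p. sg mon (lk p mon))"
  by (rule poly_mapping_eqI) (simp add: lookup_sum lookup_single' in_keys_iff)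

lemma msmult_single: "msmult c (sg mon 1) = sg mon (c :: 'a::field)"
  by (rule poly_mapping_eqI) (simp add: lookup_single')

lemma mpoly_expand_msmult: "p = (\<Sum>mon\<in>ks p. msmult (lk p mon) (sg mon (1::'a::field)))"
  by (subst mpoly_expand) (simp add: msmult_single)

lemma msmult_mult: "msmult c p * msmult d q = msmult (c * d) (p * q :: ('a::field) mpoly)"
  by (simp add: msmult_def mconst_def mult_single algebra_simps)

lemma msmult_mult_left: "msmult c p * q = msmult c (p * q :: ('a::field) mpoly)"
  by (simp add: msmult_def algebra_simps)

lemma msmult_eq_mconst: "msmult c p = mconst c * p" by (simp add: msmult_def)


definition mon_eval :: "(nat \<Rightarrow> ('a::comm_ring_1) mpoly) \<Rightarrow> (nat \<Rightarrow>\<^sub>0 nat) \<Rightarrow> 'a mpoly" where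
  "mon_eval \<tau> mon = (\<Prod>i\<in>ks mon. \<tau> i ^ lk mon i)"

definition subst :: "(nat \<Rightarrow> ('a::field) mpoly) \<Rightarrow> 'a mpoly \<Rightarrow> 'a mpoly" where
  "subst \<tau> p = (\<Sum>mon\<in>ks p. msmult (lk p mon) (mon_eval \<tau> mon))"

lemma mon_eval_superset:
  assumes "finite A" "ks mon \<subseteq> A"
  shows "mon_eval \<tau> mon = (\<Prod>i\<in>A. \<tau> i ^ lk mon i)"
  unfolding mon_eval_def
  by (rule prod.mono_neutral_left) (use assms in \<open>auto simp: in_keys_iff\<close>)

lemma mon_eval_add: "mon_eval \<tau> (a + b) = mon_eval \<tau> a * mon_eval \<tau> b"
proof -
  let ?A = "ks a \<union> ks b"
  have "mon_eval \<tau> (a + b) = (\<Prod>i\<in>?A. \<tau> i ^ lk (a + b) i)"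
    by (rule mon_eval_superset) (use keys_add[of a b] in auto)
  also have "\<dots> = (\<Prod>i\<in>?A. \<tau> i ^ lk a i) * (\<Prod>i\<in>?A. \<tau> i ^ lk b i)"
    by (simp add: lookup_add power_add prod.distrib)
  also have "\<dots> = mon_eval \<tau> a * mon_eval \<tau> b"
    by (subst (1 2) mon_eval_superset[of ?A]) auto
  finally show ?thesis .
qed

lemma mon_eval_zero[simp]: "mon_eval \<tau> 0 = 1"
  by (simp add: mon_eval_def)

lemma mon_eval_single1[simp]: "mon_eval \<tau> (sg i 1) = \<tau> i"
  by (simp add: mon_eval_def)

lemma subst_superset:
  assumes "finite A" "ks p \<subseteq> A"
  shows "subst \<tau> p = (\<Sum>mon\<in>A. msmult (lk p mon) (mon_eval \<tau> mon))"
  unfolding subst_def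
  by (rule sum.mono_neutral_left) (use assms in \<open>auto simp: in_keys_iff\<close>)

lemma subst_add: "subst \<tau> (p + q) = subst \<tau> p + subst \<tau> q"
proof -
  let ?A = "ks p \<union> ks q"
  have "subst \<tau> (p + q) = (\<Sum>mon\<in>?A. msmult (lk (p + q) mon) (mon_eval \<tau> mon))"
    by (rule subst_superset) (use keys_add[of p q] in auto)
  also have "\<dots> = (\<Sum>mon\<in>?A. msmult (lk p mon) (mon_eval \<tau> mon)) + (\<Sum>mon\<in>?A. msmult (lk q mon) (mon_eval \<tau> mon))"
    by (simp add: lookup_add V.scale_left_distrib sum.distrib)
  also have "\<dots> = subst \<tau> p + subst \<tau> q"
    by (subst (1 2) subst_superset[of ?A]) auto
  finally show ?thesis .
qed

lemma subst_0[simp]: "subst \<tau> 0 = 0"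
  by (simp add: subst_def)

lemma subst_msmult: "subst \<tau> (msmult c p) = msmult c (subst \<tau> p)"
proof -
  have "subst \<tau> (msmult c p) = (\<Sum>mon\<in>ks p. msmult (lk (msmult c p) mon) (mon_eval \<tau> mon))"
    by (rule subst_superset) (auto simp: keys_msmult)
  also have "\<dots> = msmult c (subst \<tau> p)"
    by (simp add: subst_def V.scale_sum_right V.scale_scale)
  finally show ?thesis .
qed

lemma subst_sum: "subst \<tau> (sum f A) = (\<Sum>a\<in>A. subst \<tau> (f a))"
  by (induction A rule: infinite_finite_induct) (auto simp: subst_add)

lemma subst_uminus: "subst \<tau> (- p) = - subst \<tau> p"
  by (metis add_eq_0_iff2 add.right_inverse subst_0 subst_add)

lemma subst_diff: "subst \<tau> (p - q) = subst \<tau> p - subst \<tau> q"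
  by (metis diff_conv_add_uminus subst_add subst_uminus)

lemma subst_single: "subst \<tau> (sg mon c) = msmult c (mon_eval \<tau> mon)"
  by (cases "c = 0") (auto simp: subst_def)

lemma subst_mult: "subst \<tau> (p * q) = subst \<tau> p * subst \<tau> q"
proof -
  have single: "subst \<tau> (sg a c * sg b d) = subst \<tau> (sg a c) * subst \<tau> (sg b d)" for a b c d
    by (simp add: mult_single subst_single mon_eval_add msmult_mult)
  have "p * q = (\<Sum>a\<in>ks p. sg a (lk p a)) * (\<Sum>b\<in>ks q. sg b (lk q b))"
    by (subst (1) mpoly_expand[of p], subst (1) mpoly_expand[of q]) (rule refl)
  also have "\<dots> = (\<Sum>a\<in>ks p. \<Sum>b\<in>ks q. sg a (lk p a) * sg b (lk q b))"
    by (rule sum_product)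
  finally have "subst \<tau> (p * q) = (\<Sum>a\<in>ks p. \<Sum>b\<in>ks q. subst \<tau> (sg a (lk p a)) * subst \<tau> (sg b (lk q b)))"
    by (simp add: subst_sum single)
  also have "\<dots> = (\<Sum>a\<in>ks p. subst \<tau> (sg a (lk p a))) * (\<Sum>b\<in>ks q. subst \<tau> (sg b (lk q b)))"
    by (rule sum_product[symmetric])
  also have "\<dots> = subst \<tau> p * subst \<tau> q"
    by (simp add: subst_sum[symmetric] mpoly_expand[symmetric])
  finally show ?thesis .
qed

lemma subst_1[simp]: "subst \<tau> 1 = 1"
proof -
  have "(1::'a mpoly) = sg 0 1" by simp
  then show ?thesis by (metis subst_single mon_eval_zero msmult_single)
qed

lemma subst_mconst: "subst \<tau> (mconst c) = mconst c"
  unfolding mconst_def by (simp add: subst_single) (metis msmult_single single_one)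

lemma subst_power: "subst \<tau> (p ^ k) = subst \<tau> p ^ k"
  by (induction k) (auto simp: subst_mult)

lemma mon_eval_PQ: "(\<And>i. i \<in> ks mon \<Longrightarrow> \<tau> i \<in> PQ Q) \<Longrightarrow> mon_eval \<tau> mon \<in> PQ Q"
  unfolding mon_eval_def by (intro PQ_prod PQ_power) auto

lemma subst_PQ:
  assumes "\<And>i. i \<in> Q' \<Longrightarrow> \<tau> i \<in> PQ Q" "p \<in> PQ Q'"
  shows "subst \<tau> p \<in> PQ Q"
  unfolding subst_def
proof (intro PQ_sum PQ_msmult mon_eval_PQ)
  fix mon i assume "mon \<in> ks p" "i \<in> ks mon"
  then show "\<tau> i \<in> PQ Q" using assms unfolding PQ_def by blast
qed

lemma mon_eval_GQ:
  assumes "\<And>i. i \<in> ks mon \<Longrightarrow> \<tau> i \<in> GQ Q 1"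
  shows "mon_eval \<tau> mon \<in> GQ Q (mon_deg mon)"
proof -
  have h: "homog_of_deg (lk mon i * 1) (\<tau> i ^ lk mon i)" if "i \<in> ks mon" for i
  proof (rule homog_power)
    show "homog_of_deg 1 (\<tau> i)" using assms[OF that] by (simp add: GQ_def)
  qed
  have "homog_of_deg (\<Sum>i\<in>ks mon. lk mon i * 1) (mon_eval \<tau> mon)"
    unfolding mon_eval_def
    by (rule homog_prod) (use h in auto)
  moreover have "mon_eval \<tau> mon \<in> PQ Q"
    by (rule mon_eval_PQ) (use assms in \<open>auto simp: GQ_def\<close>)
  ultimately show ?thesis by (simp add: GQ_def mon_deg_def)
qed

lemma subst_GQ:
  assumes "\<And>i. i \<in> Q' \<Longrightarrow> \<tau> i \<in> GQ Q 1" "p \<in> GQ Q' m"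
  shows "subst \<tau> p \<in> GQ Q m"
  unfolding subst_def
proof (intro GQ_sum GQ_msmult)
  fix mon assume mon: "mon \<in> ks p"
  then have "mon_deg mon = m" using assms(2) by (auto simp: GQ_def homog_of_deg_def)
  moreover have "mon_eval \<tau> mon \<in> GQ Q (mon_deg mon)"
    by (rule mon_eval_GQ) (use assms mon in \<open>auto simp: GQ_def PQ_def\<close>)
  ultimately show "mon_eval \<tau> mon \<in> GQ Q m" by simp
qed

lemma Xv_power: "Xv i ^ k = (sg (sg i k) 1 :: ('a::comm_ring_1) mpoly)"
proof (induction k)
  case 0 then show ?case by simp
next
  case (Suc k)
  then show ?case by (simp add: Xv_def mult_single single_add[symmetric] add.commute)
qed

lemma prod_single1: "(\<Prod>i\<in>A. sg (f i) (1::'a::comm_ring_1)) = sg (\<Sum>i\<in>A. f i) 1"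
  by (induction A rule: infinite_finite_induct) (auto simp: mult_single)

lemma mon_eval_Xv: "mon_eval Xv mon = (sg mon 1 :: ('a::comm_ring_1) mpoly)"
proof -
  have "mon_eval Xv mon = (\<Prod>i\<in>ks mon. sg (sg i (lk mon i)) (1::'a))"
    by (simp add: mon_eval_def Xv_power)
  also have "\<dots> = sg (\<Sum>i\<in>ks mon. sg i (lk mon i)) 1" by (rule prod_single1)
  also have "\<dots> = sg mon 1" by (simp flip: mpoly_expand)
  finally show ?thesis .
qed

lemma mon_eval_cong: "(\<And>i. i \<in> ks mon \<Longrightarrow> \<tau> i = \<tau>' i) \<Longrightarrow> mon_eval \<tau> mon = mon_eval \<tau>' mon"
  unfolding mon_eval_def by (rule prod.cong) auto

lemma subst_cong:
  assumes "\<And>i. i \<in> Q \<Longrightarrow> \<tau> i = \<tau>' i" "p \<in> PQ Q"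
  shows "subst \<tau> p = subst \<tau>' p"
  unfolding subst_def
proof (rule sum.cong[OF refl])
  fix mon assume "mon \<in> ks p"
  then have "ks mon \<subseteq> Q" using assms(2) by (auto simp: PQ_def)
  then show "msmult (lk p mon) (mon_eval \<tau> mon) = msmult (lk p mon) (mon_eval \<tau>' mon)"
    using mon_eval_cong[of mon \<tau> \<tau>'] assms(1) by auto
qed

lemma subst_Xv: "subst Xv p = (p :: ('a::field) mpoly)"
  unfolding subst_def mon_eval_Xv msmult_single by (simp flip: mpoly_expand)

lemma subst_id:
  assumes "\<And>i. i \<in> Q \<Longrightarrow> \<tau> i = Xv i" "p \<in> PQ Q"
  shows "subst \<tau> p = p"
  using subst_cong[OF assms] subst_Xv by simp


context
  fixes n :: nat and J :: "('a::field) mpoly set"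
  assumes J: "is_ideal n J"
begin

lemma ideal_sub: "J \<subseteq> polys n" using J by (simp add: is_ideal_def)
lemma ideal_0: "0 \<in> J" using J by (simp add: is_ideal_def)
lemma ideal_add: "p \<in> J \<Longrightarrow> q \<in> J \<Longrightarrow> p + q \<in> J" using J by (simp add: is_ideal_def)
lemma ideal_mult: "p \<in> polys n \<Longrightarrow> q \<in> J \<Longrightarrow> p * q \<in> J" using J by (simp add: is_ideal_def)
lemma ideal_mult_right: "p \<in> polys n \<Longrightarrow> q \<in> J \<Longrightarrow> q * p \<in> J" using ideal_mult by (simp add: mult.commute)
lemma ideal_msmult: "q \<in> J \<Longrightarrow> msmult c q \<in> J"
  unfolding msmult_eq_mconst mconst_def by (rule ideal_mult) (simp add: polys_PQ PQ_single)
lemma ideal_uminus: "q \<in> J \<Longrightarrow> - q \<in> J"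
proof -
  assume "q \<in> J"
  then have "msmult (-1) q \<in> J" by (rule ideal_msmult)
  moreover have "msmult (-1) q = - q" by (rule poly_mapping_eqI) (simp add: lookup_minus)
  ultimately show ?thesis by simp
qed
lemma ideal_diff: "p \<in> J \<Longrightarrow> q \<in> J \<Longrightarrow> p - q \<in> J"
  using ideal_add[of p "- q"] ideal_uminus[of q] by simp
lemma ideal_sum: "(\<And>a. a \<in> A \<Longrightarrow> f a \<in> J) \<Longrightarrow> sum f A \<in> J"
  by (induction A rule: infinite_finite_induct) (auto intro: ideal_add ideal_0)
lemma ideal_subspace: "V.subspace J"
  by (simp add: V.subspace_def ideal_0 ideal_add ideal_msmult)

lemma power_diff_ideal:
  assumes "a \<in> polys n" "b \<in> polys n" "a - b \<in> J"
  shows "a ^ k - b ^ k \<in> J"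
proof (induction k)
  case 0 then show ?case by (simp add: ideal_0)
next
  case (Suc k)
  have "a ^ Suc k - b ^ Suc k = a * (a ^ k - b ^ k) + (a - b) * b ^ k"
    by (simp add: algebra_simps)
  moreover have "a * (a ^ k - b ^ k) \<in> J" using Suc assms by (intro ideal_mult)
  moreover have "(a - b) * b ^ k \<in> J" using assms
    by (intro ideal_mult_right) (auto simp: polys_PQ intro: PQ_power)
  ultimately show ?case by (simp add: ideal_add)
qed

lemma prod_diff_ideal:
  assumes "\<And>i. i \<in> A \<Longrightarrow> a i \<in> polys n" "\<And>i. i \<in> A \<Longrightarrow> b i \<in> polys n"
    "\<And>i. i \<in> A \<Longrightarrow> a i - b i \<in> J"
  shows "prod a A - prod b A \<in> J"
  using assms
proof (induction A rule: infinite_finite_induct)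
  case (infinite A) then show ?case by (simp add: ideal_0)
next
  case empty then show ?case by (simp add: ideal_0)
next
  case (insert x F)
  have "prod a (insert x F) - prod b (insert x F) = a x * (prod a F - prod b F) + (a x - b x) * prod b F"
    using insert by (simp add: algebra_simps)
  moreover have "a x * (prod a F - prod b F) \<in> J" using insert by (intro ideal_mult) auto
  moreover have "(a x - b x) * prod b F \<in> J" using insert
    by (intro ideal_mult_right) (auto simp: polys_PQ intro: PQ_prod)
  ultimately show ?case by (simp add: ideal_add)
qed

lemma subst_congr_ideal:
  assumes "\<And>i. i \<le> n \<Longrightarrow> \<tau> i \<in> polys n" "\<And>i. i \<le> n \<Longrightarrow> Xv i - \<tau> i \<in> J"
    and p: "p \<in> polys n"
  shows "p - subst \<tau> p \<in> J"
proof -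
  have Xp: "Xv i \<in> polys n" if "i \<le> n" for i
    using that by (simp add: Xv_def polys_PQ PQ_single)
  have "p - subst \<tau> p = (\<Sum>mon\<in>ks p. msmult (lk p mon) (mon_eval Xv mon - mon_eval \<tau> mon))"
    by (subst (1) mpoly_expand_msmult)
       (simp add: subst_def mon_eval_Xv V.scale_right_diff_distrib sum_subtractf)
  also have "\<dots> \<in> J"
  proof (intro ideal_sum ideal_msmult)
    fix mon assume "mon \<in> ks p"
    then have k: "ks mon \<subseteq> {..n}" using p by (auto simp: polys_PQ PQ_def)
    show "mon_eval Xv mon - mon_eval \<tau> mon \<in> J"
      unfolding mon_eval_def
    proof (rule prod_diff_ideal)
      fix i assume "i \<in> ks mon"
      then have i: "i \<le> n" using k by auto
      show "Xv i ^ lk mon i \<in> polys n" using Xp[OF i] unfolding polys_PQ by (rule PQ_power)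
      show "\<tau> i ^ lk mon i \<in> polys n" using assms(1)[OF i] unfolding polys_PQ by (rule PQ_power)
      show "Xv i ^ lk mon i - \<tau> i ^ lk mon i \<in> J"
        using power_diff_ideal[OF Xp[OF i] assms(1)[OF i] assms(2)[OF i]] .
    qed
  qed
  finally show ?thesis .
qed

end

lemma Xv_polys: "i \<le> n \<Longrightarrow> Xv i \<in> polys n"
  by (simp add: Xv_def polys_PQ PQ_single)

lemma Xv_graded: "i \<le> n \<Longrightarrow> Xv i \<in> graded_part n 1"
  by (simp add: Xv_def graded_GQ GQ_def PQ_single homog_single)

lemma mconst_polys: "mconst c \<in> polys n"
  by (simp add: mconst_def polys_PQ PQ_single)

lemma polys_ideal: "is_ideal n (polys n :: ('a::field) mpoly set)"
  by (simp add: is_ideal_def polys_PQ PQ_add PQ_mult)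

lemma gen_ideal_ideal:
  assumes "S \<subseteq> polys n"
  shows "is_ideal n (gen_ideal n (S :: ('a::field) mpoly set))"
proof -
  let ?F = "{J. is_ideal n J \<and> S \<subseteq> J}"
  have ne: "polys n \<in> ?F" using assms polys_ideal by blast
  show ?thesis unfolding gen_ideal_def is_ideal_def[of n "\<Inter>?F"]
  proof (intro conjI ballI)
    show "\<Inter>?F \<subseteq> polys n" using ne by blast
    show "0 \<in> \<Inter>?F" by (auto simp: is_ideal_def)
    show "p + q \<in> \<Inter>?F" if "p \<in> \<Inter>?F" "q \<in> \<Inter>?F" for p q
      using that by (auto simp: is_ideal_def)
    show "p * q \<in> \<Inter>?F" if "p \<in> polys n" "q \<in> \<Inter>?F" for p q
      using that by (auto simp: is_ideal_def)
  qed
qed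

lemma gen_ideal_sub: "S \<subseteq> polys n \<Longrightarrow> S \<subseteq> gen_ideal n S"
  unfolding gen_ideal_def by blast

lemma gen_ideal_min: "is_ideal n J \<Longrightarrow> S \<subseteq> J \<Longrightarrow> gen_ideal n S \<subseteq> J"
  unfolding gen_ideal_def by blast


context vector_space
begin

lemma indep_card_le_dim:
  assumes W: "finite W" "B \<subseteq> span W" and C: "independent C" "C \<subseteq> span B"
  shows "finite C \<and> card C \<le> dim B"
proof -
  obtain BB where BB: "BB \<subseteq> B" "independent BB" "B \<subseteq> span BB" "card BB = dim B"
    by (rule basis_exists)
  have fBB: "finite BB" using independent_span_bound[OF W(1) BB(2)] BB(1) W(2) by blast
  have "C \<subseteq> span BB"
    using C(2) BB(3) by (metis span_mono span_span subset_trans)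
  then show ?thesis using independent_span_bound[OF fBB C(1)] BB(4) by simp
qed

lemma dim_le_fd:
  assumes W: "finite W" "B \<subseteq> span W" and A: "A \<subseteq> span B"
  shows "dim A \<le> dim B"
proof -
  obtain BA where BA: "BA \<subseteq> A" "independent BA" "A \<subseteq> span BA" "card BA = dim A"
    by (rule basis_exists)
  have "BA \<subseteq> span B" using BA(1) A by blast
  then show ?thesis using indep_card_le_dim[OF W BA(2)] BA(4) by simp
qed

lemma subspace_eq_dim:
  assumes W: "finite W" "B \<subseteq> span W" and A: "subspace A" "A \<subseteq> B" and d: "dim B \<le> dim A"
  shows "B \<subseteq> A"
proof
  fix x assume xB: "x \<in> B"
  show "x \<in> A"
  proof (rule ccontr)
    assume xA: "x \<notin> A"
    obtain BA where BA: "BA \<subseteq> A" "independent BA" "A \<subseteq> span BA" "card BA = dim A"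
      by (rule basis_exists)
    have spBA: "span BA \<subseteq> A" using BA(1) A(1) by (simp add: span_minimal)
    have "x \<notin> span BA" using xA spBA by blast
    then have ind: "independent (insert x BA)" using BA(2) by (rule independent_insertI)
    have sub: "insert x BA \<subseteq> span B" using xB BA(1) A(2) span_superset by blast
    from indep_card_le_dim[OF W ind sub]
    have "finite (insert x BA)" "card (insert x BA) \<le> dim B" by auto
    moreover have "x \<notin> BA" using xA BA(1) by blast
    ultimately have "card BA + 1 \<le> dim B" by simp
    with BA(4) d show False by simp
  qed
qed

lemma dim_union_direct:
  assumes W: "finite W" "A \<subseteq> span W" "B \<subseteq> span W"
    and A: "subspace A" and B: "subspace B" and AB: "A \<inter> B \<subseteq> {0}"
  shows "dim (A \<union> B) = dim A + dim B"
proof -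
  obtain BA where BA: "BA \<subseteq> A" "independent BA" "A \<subseteq> span BA" "card BA = dim A"
    by (rule basis_exists)
  obtain BB where BB: "BB \<subseteq> B" "independent BB" "B \<subseteq> span BB" "card BB = dim B"
    by (rule basis_exists)
  have fA: "finite BA" using independent_span_bound[OF W(1) BA(2)] BA(1) W(2) by blast
  have fB: "finite BB" using independent_span_bound[OF W(1) BB(2)] BB(1) W(3) by blast
  have spA: "span BA = A" using BA A by (simp add: span_subspace)
  have spB: "span BB = B" using BB B by (simp add: span_subspace)
  have disj: "BA \<inter> BB = {}"
  proof -
    have "0 \<notin> BA" using BA(2) dependent_zero by blast
    then show ?thesis using BA(1) BB(1) AB by blast
  qed
  have key: "a \<notin> span ((C1 \<union> C2) - {a})"
    if C1: "independent C1" "span C1 = A1" "subspace A1" and C2: "span C2 = B1"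
      and AB1: "A1 \<inter> B1 \<subseteq> {0}" and a: "a \<in> C1" and dj: "C1 \<inter> C2 = {}"
    for C1 C2 A1 B1 a
  proof
    assume "a \<in> span ((C1 \<union> C2) - {a})"
    moreover have "(C1 \<union> C2) - {a} = (C1 - {a}) \<union> C2" using a dj by blast
    ultimately obtain x y where xy: "a = x + y" "x \<in> span (C1 - {a})" "y \<in> span C2"
      using span_Un by auto
    have "x \<in> A1" using xy(2) C1 span_mono[of "C1 - {a}" C1] by blast
    moreover have "a \<in> A1" using a C1 span_superset by blast
    ultimately have "y \<in> A1" using xy(1) C1(3) subspace_diff[of A1 a x] by (simp add: algebra_simps)
    moreover have "y \<in> B1" using xy(3) C2 by simp
    ultimately have "y = 0" using AB1 by blast
    then have "a \<in> span (C1 - {a})" using xy by simp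
    then show False using C1(1) a dependent_def by blast
  qed
  have ind: "independent (BA \<union> BB)"
  proof
    assume "dependent (BA \<union> BB)"
    then obtain a where "a \<in> BA \<union> BB" "a \<in> span (BA \<union> BB - {a})"
      unfolding dependent_def by blast
    then show False
      using key[OF BA(2) spA A spB AB _ disj, of a]
        key[OF BB(2) spB B spA _ _ , of a] disj AB
      by (auto simp: Un_commute Int_commute)
  qed
  have "card (BA \<union> BB) = dim (A \<union> B)"
  proof (rule basis_card_eq_dim)
    show "BA \<union> BB \<subseteq> A \<union> B" using BA BB by blast
    show "A \<union> B \<subseteq> span (BA \<union> BB)"
      using BA(3) BB(3) span_mono[of BA "BA \<union> BB"] span_mono[of BB "BA \<union> BB"] by blast
  qed (rule ind)
  moreover have "card (BA \<union> BB) = card BA + card BB"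
    using fA fB disj by (simp add: card_Un_disjoint)
  ultimately show ?thesis using BA(4) BB(4) by simp
qed

end

lemma V_dim_inj_image:
  fixes f :: "('a::field) mpoly \<Rightarrow> 'a mpoly"
  assumes add: "\<And>x y. f (x + y) = f x + f y" and sc: "\<And>c x. f (msmult c x) = msmult c (f x)"
    and inj: "inj_on f A" and A: "V.subspace A"
  shows "V.dim (f ` A) = V.dim A"
proof -
  have lin: "Vector_Spaces.linear msmult msmult f"
    unfolding Vector_Spaces.linear_iff using V.vector_space_axioms add sc by blast
  then have mh: "module_hom msmult msmult f" by (simp add: module_hom_iff_linear)
  obtain BA where BA: "BA \<subseteq> A" "V.independent BA" "A \<subseteq> V.span BA" "card BA = V.dim A"
    by (rule V.basis_exists)
  have spA: "V.span BA = A" using BA A by (simp add: V.span_subspace)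
  have ind: "V.independent (f ` BA)"
    using module_hom.independent_injective_image[OF mh BA(2)] inj spA by simp
  have "card (f ` BA) = V.dim (f ` A)"
  proof (rule V.basis_card_eq_dim)
    show "f ` BA \<subseteq> f ` A" using BA by blast
    show "f ` A \<subseteq> V.span (f ` BA)"
      using module_hom.span_image[OF mh, of BA] spA by simp
  qed (rule ind)
  moreover have "card (f ` BA) = card BA"
    using inj BA(1) by (simp add: card_image inj_on_subset)
  ultimately show ?thesis using BA(4) by simp
qed


definition MQ :: "nat set \<Rightarrow> nat \<Rightarrow> (nat \<Rightarrow>\<^sub>0 nat) set" where
  "MQ Q m = {mon. ks mon \<subseteq> Q \<and> mon_deg mon = m}"

lemma lk_le_mon_deg: "lk mon a \<le> mon_deg mon"
proof (cases "a \<in> ks mon")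
  case True
  then show ?thesis unfolding mon_deg_def
    by (intro member_le_sum) auto
next
  case False then show ?thesis by (simp add: in_keys_iff)
qed

lemma MQ_empty: "MQ {} m = (if m = 0 then {0} else {})"
  by (auto simp: MQ_def mon_deg_0_iff)

lemma MQ_insert:
  assumes "a \<notin> Q"
  shows "MQ (insert a Q) m = (\<Union>j\<in>{..m}. (\<lambda>mon. mon + sg a j) ` MQ Q (m - j))"
proof (intro equalityI subsetI)
  fix mon assume mon: "mon \<in> MQ (insert a Q) m"
  define j where "j = lk mon a"
  define mon' where "mon' = mon - sg a j"
  have eq: "mon = mon' + sg a j"
    by (rule poly_mapping_eqI) (simp add: mon'_def lookup_add lookup_minus lookup_single' j_def)
  have "ks mon' \<subseteq> Q"
  proof
    fix i assume i: "i \<in> ks mon'"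
    then have "i \<noteq> a" by (auto simp: mon'_def in_keys_iff lookup_minus lookup_single' j_def split: if_splits)
    moreover have "i \<in> ks mon" using i by (simp add: mon'_def in_keys_iff lookup_minus lookup_single' split: if_splits)
    ultimately show "i \<in> Q" using mon by (auto simp: MQ_def)
  qed
  moreover have "j \<le> m" using lk_le_mon_deg[of mon a] mon by (simp add: MQ_def j_def)
  moreover have "mon_deg mon' = m - j"
    using mon eq by (simp add: MQ_def mon_deg_add) (metis add_diff_cancel_right' mon_deg_add mon_deg_single)
  ultimately show "mon \<in> (\<Union>j\<in>{..m}. (\<lambda>mon. mon + sg a j) ` MQ Q (m - j))"
    using eq by (auto simp: MQ_def)
next
  fix mon assume "mon \<in> (\<Union>j\<in>{..m}. (\<lambda>mon. mon + sg a j) ` MQ Q (m - j))"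
  then obtain j mon' where j: "j \<le> m" "mon' \<in> MQ Q (m - j)" "mon = mon' + sg a j" by auto
  have "ks mon \<subseteq> insert a Q" using j keys_add[of mon' "sg a j"] by (auto simp: MQ_def split: if_splits)
  moreover have "mon_deg mon = m" using j by (simp add: MQ_def mon_deg_add)
  ultimately show "mon \<in> MQ (insert a Q) m" by (simp add: MQ_def)
qed

lemma finite_MQ: "finite Q \<Longrightarrow> finite (MQ Q m)"
proof (induction Q arbitrary: m rule: finite_induct)
  case empty then show ?case by (simp add: MQ_empty)
next
  case (insert a Q) then show ?case by (simp add: MQ_insert)
qed

lemma card_MQ: "finite Q \<Longrightarrow> card (MQ Q m) = (card Q + m - 1) choose m"
proof (induction Q arbitrary: m rule: finite_induct)
  case empty then show ?case by (simp add: MQ_empty)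
next
  case (insert a Q)
  let ?A = "\<lambda>j. (\<lambda>mon. mon + sg a j) ` MQ Q (m - j)"
  have "card (MQ (insert a Q) m) = card (\<Union>j\<in>{..m}. ?A j)"
    using insert by (simp add: MQ_insert)
  also have "\<dots> = (\<Sum>j\<le>m. card (?A j))"
  proof (rule card_UN_disjoint)
    show "\<forall>i\<in>{..m}. finite (?A i)" using insert finite_MQ by blast
    show "\<forall>i\<in>{..m}. \<forall>j\<in>{..m}. i \<noteq> j \<longrightarrow> ?A i \<inter> ?A j = {}"
    proof (intro ballI impI)
      fix i j :: nat assume "i \<noteq> j"
      have "lk (mon + sg a k) a = k" if "mon \<in> MQ Q l" for mon k l
      proof -
        have "a \<notin> ks mon" using that insert by (auto simp: MQ_def)
        then show ?thesis by (simp add: lookup_add in_keys_iff)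
      qed
      note L = this
      show "?A i \<inter> ?A j = {}"
      proof (rule ccontr)
        assume "?A i \<inter> ?A j \<noteq> {}"
        then obtain x y where xy: "x \<in> MQ Q (m - i)" "y \<in> MQ Q (m - j)" "x + sg a i = y + sg a j"
          by blast
        have "i = lk (x + sg a i) a" using L[OF xy(1)] by simp
        also have "\<dots> = lk (y + sg a j) a" using xy(3) by simp
        also have "\<dots> = j" using L[OF xy(2)] by simp
        finally show False using \<open>i \<noteq> j\<close> by simp
      qed
    qed
  qed simp
  also have "\<dots> = (\<Sum>j\<le>m. card (MQ Q (m - j)))"
    by (intro sum.cong refl card_image) (simp add: inj_on_def)
  also have "\<dots> = (\<Sum>j\<le>m. (card Q + (m - j) - 1) choose (m - j))"
    using insert by simp
  also have "\<dots> = (\<Sum>i\<le>m. (card Q + i - 1) choose i)"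
  proof -
    have "(\<Sum>j<Suc m. (card Q + (Suc m - Suc j) - 1) choose (Suc m - Suc j)) = (\<Sum>i<Suc m. (card Q + i - 1) choose i)"
      by (rule sum.nat_diff_reindex)
    then show ?thesis by (simp add: lessThan_Suc_atMost)
  qed
  also have "\<dots> = (card (insert a Q) + m - 1) choose m"
  proof (cases "card Q = 0")
    case True
    have "(\<Sum>i\<le>m. (card Q + i - 1) choose i) = (\<Sum>i\<le>m. if i = 0 then 1 else 0)"
      using True by (intro sum.cong refl) auto
    also have "\<dots> = 1" by simp
    finally show ?thesis using True insert by simp
  next
    case False
    have "(\<Sum>i\<le>m. (card Q + i - 1) choose i) = (\<Sum>i\<le>m. ((card Q - 1) + i) choose i)"
      using False by (intro sum.cong refl) auto
    also have "\<dots> = Suc (card Q - 1 + m) choose m" by (rule sum_choose_lower)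
    finally show ?thesis using False insert by simp
  qed
  finally show ?case .
qed

lemma single1_inj[simp]: "sg x (1::'a::zero_neq_one) = sg y 1 \<longleftrightarrow> x = y"
  by (metis lookup_single' one_neq_zero lookup_single_eq)

lemma lk_mono_single: "lk (sg mon (1::'a::zero_neq_one)) mon' = (if mon = mon' then 1 else 0)"
  by (simp add: lookup_single')

lemma indep_monomials: "V.independent ((\<lambda>mon. sg mon (1::'a::field)) ` M)"
  unfolding V.independent_explicit_module
proof (intro allI impI)
  fix t u v
  assume t: "finite t" "t \<subseteq> (\<lambda>mon. sg mon (1::'a)) ` M" and s: "(\<Sum>v\<in>t. msmult (u v) v) = 0" and v: "v \<in> t"
  obtain mon where mon: "v = sg mon 1" using v t by auto
  have "0 = lk (\<Sum>w\<in>t. msmult (u w) w) mon" using s by simp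
  also have "\<dots> = (\<Sum>w\<in>t. if w = v then u w else 0)"
  proof (unfold lookup_sum, intro sum.cong refl)
    fix w assume "w \<in> t"
    then obtain mw where mw: "w = sg mw 1" using t by auto
    show "lk (msmult (u w) w) mon = (if w = v then u w else 0)"
      using mw mon by (auto simp: lookup_single')
  qed
  also have "\<dots> = u v" using t v by simp
  finally show "u v = 0" by simp
qed

lemma GQ_span: "GQ Q m \<subseteq> V.span ((\<lambda>mon. sg mon (1::'a::field)) ` MQ Q m)"
proof
  fix p :: "'a mpoly" assume p: "p \<in> GQ Q m"
  have "p = (\<Sum>mon\<in>ks p. msmult (lk p mon) (sg mon 1))" by (rule mpoly_expand_msmult)
  also have "\<dots> \<in> V.span ((\<lambda>mon. sg mon (1::'a::field)) ` MQ Q m)"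
  proof (intro V.span_sum V.span_scale V.span_base)
    fix mon assume "mon \<in> ks p"
    then have "mon \<in> MQ Q m" using p by (auto simp: GQ_def PQ_def homog_of_deg_def MQ_def)
    then show "sg mon 1 \<in> (\<lambda>mon. sg mon (1::'a::field)) ` MQ Q m" by blast
  qed
  finally show "p \<in> V.span ((\<lambda>mon. sg mon (1::'a::field)) ` MQ Q m)" .
qed

lemma monomials_GQ: "(\<lambda>mon. sg mon (1::'a::field)) ` MQ Q m \<subseteq> GQ Q m"
  by (auto simp: MQ_def GQ_def PQ_single homog_single)

lemma dim_GQ: "finite Q \<Longrightarrow> V.dim (GQ Q m :: ('a::field) mpoly set) = (card Q + m - 1) choose m"
proof -
  assume fQ: "finite Q"
  have "card ((\<lambda>mon. sg mon (1::'a)) ` MQ Q m) = V.dim (GQ Q m :: 'a mpoly set)"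
    by (rule V.basis_card_eq_dim[OF monomials_GQ GQ_span indep_monomials])
  moreover have "card ((\<lambda>mon. sg mon (1::'a)) ` MQ Q m) = card (MQ Q m)"
    by (rule card_image) (simp add: inj_on_def)
  ultimately show ?thesis using card_MQ[OF fQ] by simp
qed

lemma GQ_fin: "finite Q \<Longrightarrow> finite ((\<lambda>mon. sg mon (1::'a::field)) ` MQ Q m)"
  by (simp add: finite_MQ)


lemma (in vector_space) span_Int_indep:
  assumes "finite S" "finite T" "independent (S \<union> T)" "S \<inter> T = {}"
    and x: "x \<in> span S" "x \<in> span T"
  shows "x = 0"
proof -
  obtain a where a: "x = (\<Sum>v\<in>S. a v *s v)" using x(1) span_finite[OF assms(1)] by auto
  obtain b where b: "x = (\<Sum>v\<in>T. b v *s v)" using x(2) span_finite[OF assms(2)] by auto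
  define c where "c v = (if v \<in> S then a v else - b v)" for v
  have "(\<Sum>v\<in>S \<union> T. c v *s v) = (\<Sum>v\<in>S. c v *s v) + (\<Sum>v\<in>T. c v *s v)"
    using assms by (simp add: sum.union_disjoint)
  also have "(\<Sum>v\<in>S. c v *s v) = x" using a by (simp add: c_def)
  also have "(\<Sum>v\<in>T. c v *s v) = - x" using b assms(4)
    by (auto simp: c_def sum_negf[symmetric] intro!: sum.cong)
  finally have "(\<Sum>v\<in>S \<union> T. c v *s v) = 0" by simp
  then have "\<forall>v\<in>S. c v = 0" using independentD[OF assms(3)] assms(1,2) by blast
  then show ?thesis using a by (simp add: c_def)
qed

lemma mon_deg_1: "mon_deg mon = 1 \<Longrightarrow> \<exists>i. mon = sg i 1"
proof -
  assume d: "mon_deg mon = 1"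
  then have "mon \<noteq> 0" by auto
  then obtain i where i: "i \<in> ks mon" using keys_eq_empty by blast
  have fin: "finite (ks mon)" by simp
  have "mon_deg mon = lk mon i + (\<Sum>j\<in>ks mon - {i}. lk mon j)"
    unfolding mon_deg_def using sum.remove[OF fin i] by simp
  moreover have "lk mon i \<ge> 1" using i by (simp add: in_keys_iff)
  ultimately have li: "lk mon i = 1" and rest: "(\<Sum>j\<in>ks mon - {i}. lk mon j) = 0" using d by auto
  have "lk mon j = 0" if "j \<noteq> i" for j
  proof (rule ccontr)
    assume "lk mon j \<noteq> 0"
    then have "j \<in> ks mon - {i}" using that by (simp add: in_keys_iff)
    then show False using rest fin \<open>lk mon j \<noteq> 0\<close> by simp
  qed
  then have "mon = sg i 1" using li by (intro poly_mapping_eqI) (auto simp: lookup_single')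
  then show ?thesis by blast
qed

lemma graded1_span: "graded_part n 1 \<subseteq> V.span (Xv ` {..n} :: ('a::field) mpoly set)"
proof -
  have "(\<lambda>mon. sg mon (1::'a)) ` MQ {..n} 1 \<subseteq> Xv ` {..n}"
  proof
    fix x assume "x \<in> (\<lambda>mon. sg mon (1::'a)) ` MQ {..n} 1"
    then obtain mon where mon: "x = sg mon 1" "ks mon \<subseteq> {..n}" "mon_deg mon = 1" by (auto simp: MQ_def)
    then obtain i where "mon = sg i 1" using mon_deg_1 by blast
    then show "x \<in> Xv ` {..n}" using mon by (auto simp: Xv_def)
  qed
  then show ?thesis using GQ_span[of "{..n}" 1] V.span_mono unfolding graded_GQ by blast
qed

lemma Xv_inj: "inj (Xv :: nat \<Rightarrow> ('a::field) mpoly)"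
proof (rule injI)
  fix i j assume "(Xv i :: 'a mpoly) = Xv j"
  then have "sg i (1::nat) = sg j 1" by (simp add: Xv_def)
  then have "lk (sg i (1::nat)) i = lk (sg j 1) i" by (simp only:)
  then show "i = j" by (simp add: lookup_single' split: if_splits)
qed

lemma Xv_indep: "V.independent (Xv ` A :: ('a::field) mpoly set)"
proof -
  have "Xv ` A = (\<lambda>mon. sg mon (1::'a)) ` ((\<lambda>i. sg i 1) ` A)" by (auto simp: Xv_def)
  then show ?thesis using indep_monomials by metis
qed

lemma dim_graded1: "V.dim (graded_part n 1 :: ('a::field) mpoly set) = n + 1"
  unfolding graded_GQ by (simp add: dim_GQ)

lemma lin_indep_props:
  assumes "lin_indep_linear_forms n r (u :: nat \<Rightarrow> ('a::field) mpoly)"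
  shows "inj_on u {..<r}" "V.independent (u ` {..<r})" "u ` {..<r} \<subseteq> graded_part n 1"
proof -
  have L: "\<And>c. (\<Sum>i<r. msmult (c i) (u i)) = 0 \<Longrightarrow> (\<forall>i<r. c i = 0)"
    using assms by (simp add: lin_indep_linear_forms_def)
  show "u ` {..<r} \<subseteq> graded_part n 1" using assms by (auto simp: lin_indep_linear_forms_def)
  show inj: "inj_on u {..<r}"
  proof (rule inj_onI, rule ccontr)
    fix i j assume ij: "i \<in> {..<r}" "j \<in> {..<r}" "u i = u j" "i \<noteq> j"
    define c where "c k = (if k = i then (1::'a) else if k = j then -1 else 0)" for k
    have "(\<Sum>k<r. msmult (c k) (u k)) = (\<Sum>k\<in>{i, j}. msmult (c k) (u k))"
      by (rule sum.mono_neutral_right) (use ij in \<open>auto simp: c_def\<close>)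
    also have "\<dots> = 0" using ij by (simp add: c_def V.scale_left_diff_distrib[symmetric])
    finally have "c i = 0" using L ij by blast
    then show False by (simp add: c_def)
  qed
  show "V.independent (u ` {..<r})"
  proof (rule V.independent_if_scalars_zero)
    fix f x assume s: "(\<Sum>x\<in>u ` {..<r}. msmult (f x) x) = 0" and x: "x \<in> u ` {..<r}"
    have "(\<Sum>i<r. msmult (f (u i)) (u i)) = 0"
      using s by (simp add: sum.reindex[OF inj])
    then have "\<forall>i<r. f (u i) = 0" using L[of "\<lambda>i. f (u i)"] by simp
    then show "f x = 0" using x by auto
  qed simp
qed

lemma decomposition:
  fixes u :: "nat \<Rightarrow> ('a::field) mpoly"
  assumes lin: "lin_indep_linear_forms n r u"
  obtains Q \<tau> where "Q \<subseteq> {..n}" "card Q + r = n + 1"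
    "\<And>i. i \<le> n \<Longrightarrow> \<tau> i \<in> GQ Q 1" "\<And>i. i \<in> Q \<Longrightarrow> \<tau> i = Xv i"
    "gen_ideal n (u ` {..<r}) = {p \<in> polys n. subst \<tau> p = 0}"
proof -
  let ?R1 = "graded_part n 1 :: 'a mpoly set"
  define U where "U = u ` {..<r}"
  define Xs where "Xs = (Xv ` {..n} :: 'a mpoly set)"
  note LP = lin_indep_props[OF lin, folded U_def]
  have XsR: "Xs \<subseteq> ?R1" using Xv_graded by (auto simp: Xs_def)
  have R1sp: "?R1 \<subseteq> V.span Xs" using graded1_span by (simp add: Xs_def)
  have fXs: "finite Xs" by (simp add: Xs_def)
  obtain B where B: "U \<subseteq> B" "B \<subseteq> U \<union> Xs" "V.independent B" "U \<union> Xs \<subseteq> V.span B"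
    using V.maximal_independent_subset_extend[of U "U \<union> Xs"] LP(2) by blast
  have BR: "B \<subseteq> ?R1" using B(2) XsR LP(3) by blast
  have fB: "finite B" using V.independent_span_bound[OF fXs B(3)] BR R1sp by blast
  have cardB: "card B = n + 1"
  proof -
    have "card B = V.dim ?R1"
    proof (rule V.basis_card_eq_dim[OF BR _ B(3)])
      have "Xs \<subseteq> V.span B" using B(4) by blast
      then have "V.span Xs \<subseteq> V.span B" using V.span_minimal V.subspace_span by blast
      then show "?R1 \<subseteq> V.span B" using R1sp by blast
    qed
    then show ?thesis using dim_graded1[of n, where 'a='a] by simp
  qed
  define X' where "X' = B - U"
  define Q where "Q = {i. i \<le> n \<and> Xv i \<in> X'}"
  have X'Q: "X' = Xv ` Q" using B(2) by (auto simp: X'_def Q_def Xs_def)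
  have Qn: "Q \<subseteq> {..n}" by (auto simp: Q_def)
  have cardU: "card U = r" using LP(1) by (simp add: U_def card_image)
  have cardQ: "card Q + r = n + 1"
  proof -
    have "card X' = card B - card U" unfolding X'_def using B(1) fB by (simp add: card_Diff_subset finite_subset)
    moreover have "card U \<le> card B" using B(1) fB by (simp add: card_mono)
    moreover have "card X' = card Q" unfolding X'Q by (rule card_image[OF inj_on_subset[OF Xv_inj subset_UNIV]])
    ultimately show ?thesis using cardB cardU by simp
  qed
  have BUX: "B = U \<union> X'" using B(1) by (auto simp: X'_def)
  have disj: "U \<inter> X' = {}" by (auto simp: X'_def)
  have fU: "finite U" by (simp add: U_def)
  have fX': "finite X'" using fB by (simp add: X'_def)
  have spX'GQ: "V.span X' \<subseteq> GQ Q 1"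
    by (rule V.span_minimal[OF _ subspace_GQ]) (auto simp: X'Q Xv_def GQ_def PQ_single homog_single)
  have ex: "\<exists>b. b \<in> V.span X' \<and> Xv i - b \<in> V.span U" if "i \<le> n" for i
  proof -
    have "Xv i \<in> V.span (U \<union> X')" using B(4) BUX that by (auto simp: Xs_def)
    then have "Xv i \<in> {x + y | x y. x \<in> V.span U \<and> y \<in> V.span X'}"
      by (simp only: V.span_Un)
    then obtain a b where "Xv i = a + b" "a \<in> V.span U" "b \<in> V.span X'"
      by blast
    then show ?thesis by (intro exI[of _ b]) simp
  qed
  define \<tau> where "\<tau> i = (if i \<in> Q then Xv i else (SOME b. b \<in> V.span X' \<and> Xv i - b \<in> V.span U))" for i
  have tau: "\<tau> i \<in> V.span X' \<and> Xv i - \<tau> i \<in> V.span U" if "i \<le> n" for i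
  proof (cases "i \<in> Q")
    case True
    then show ?thesis by (simp add: \<tau>_def X'Q V.span_base V.span_zero)
  next
    case False
    then show ?thesis using someI_ex[OF ex[OF that]] by (simp add: \<tau>_def)
  qed
  have tauGQ: "\<tau> i \<in> GQ Q 1" if "i \<le> n" for i using tau[OF that] spX'GQ by blast
  have tauQ: "\<tau> i = Xv i" if "i \<in> Q" for i using that by (simp add: \<tau>_def)
  have tau_polys: "\<tau> i \<in> polys n" if "i \<le> n" for i
    using tauGQ[OF that] Qn PQ_mono[OF Qn] by (auto simp: GQ_def polys_PQ)
  have lin_sub: "p - subst \<tau> p \<in> V.span U \<and> subst \<tau> p \<in> V.span X'" if p: "p \<in> ?R1" for p
  proof -
    have mons: "\<exists>i\<le>n. mon = sg i 1" if "mon \<in> ks p" for mon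
    proof -
      have "mon_deg mon = 1" "ks mon \<subseteq> {..n}" using p that by (auto simp: graded_GQ GQ_def PQ_def homog_of_deg_def)
      then show ?thesis using mon_deg_1 by fastforce
    qed
    have "p - subst \<tau> p = (\<Sum>mon\<in>ks p. msmult (lk p mon) (sg mon 1 - mon_eval \<tau> mon))"
      by (subst (1) mpoly_expand_msmult)
         (simp add: subst_def V.scale_right_diff_distrib sum_subtractf)
    also have "\<dots> \<in> V.span U"
    proof (intro V.span_sum V.span_scale)
      fix mon assume "mon \<in> ks p"
      then obtain i where "i \<le> n" "mon = sg i 1" using mons by blast
      then show "sg mon 1 - mon_eval \<tau> mon \<in> V.span U" using tau[of i] mon_eval_single1[of \<tau> i] by (simp add: Xv_def)
    qed
    finally have A: "p - subst \<tau> p \<in> V.span U" .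
    have "subst \<tau> p \<in> V.span X'"
      unfolding subst_def
    proof (intro V.span_sum V.span_scale)
      fix mon assume "mon \<in> ks p"
      then obtain i where "i \<le> n" "mon = sg i 1" using mons by blast
      then show "mon_eval \<tau> mon \<in> V.span X'" using tau[of i] mon_eval_single1[of \<tau> i] by simp
    qed
    with A show ?thesis by simp
  qed
  have Uker: "subst \<tau> x = 0" if "x \<in> U" for x
  proof -
    have xR: "x \<in> ?R1" using that LP(3) by blast
    have "subst \<tau> x = x - (x - subst \<tau> x)" by simp
    also have "\<dots> \<in> V.span U" by (rule V.span_diff[OF V.span_base[OF that] conjunct1[OF lin_sub[OF xR]]])
    finally have "subst \<tau> x \<in> V.span U" .
    moreover have "V.independent (U \<union> X')" using B(3) BUX by simp
    ultimately show ?thesis using lin_sub[OF xR] V.span_Int_indep[OF fU fX' _ disj] by blast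
  qed
  have Upolys: "U \<subseteq> polys n" using LP(3) by (auto simp: graded_part_def)
  have "gen_ideal n U = {p \<in> polys n. subst \<tau> p = 0}"
  proof
    have "is_ideal n {p \<in> polys n. subst \<tau> p = 0}"
      unfolding is_ideal_def by (auto simp: subst_add subst_mult polys_PQ PQ_add PQ_mult)
    then show "gen_ideal n U \<subseteq> {p \<in> polys n. subst \<tau> p = 0}"
      by (rule gen_ideal_min) (use Upolys Uker in auto)
  next
    have GI: "is_ideal n (gen_ideal n U)" by (rule gen_ideal_ideal[OF Upolys])
    have spU: "V.span U \<subseteq> gen_ideal n U"
      by (rule V.span_minimal[OF gen_ideal_sub[OF Upolys] ideal_subspace[OF GI]])
    show "{p \<in> polys n. subst \<tau> p = 0} \<subseteq> gen_ideal n U"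
    proof clarify
      fix p assume p: "p \<in> polys n" "subst \<tau> p = 0"
      have "p - subst \<tau> p \<in> gen_ideal n U"
        by (rule subst_congr_ideal[OF GI tau_polys _ p(1)]) (use tau spU in \<open>blast+\<close>)
      then show "p \<in> gen_ideal n U" using p by simp
    qed
  qed
  then show ?thesis using that[OF Qn cardQ tauGQ tauQ] by (simp add: U_def)
qed


lemma lookup_hcomp: "lk (hcomp m p) mon = (if mon_deg mon = m then lk p mon else 0)"
proof -
  have "finite {mon. (if mon_deg mon = m then lk p mon else 0) \<noteq> 0}"
    by (rule finite_subset[of _ "ks p"]) (auto simp: in_keys_iff)
  then show ?thesis unfolding hcomp_def by simp
qed

lemma keys_hcomp: "ks (hcomp m p) \<subseteq> ks p"
  by (auto simp: in_keys_iff lookup_hcomp split: if_splits)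

lemma hcomp_add: "hcomp m (p + q) = hcomp m p + hcomp m q"
  by (rule poly_mapping_eqI) (simp add: lookup_hcomp lookup_add)

lemma hcomp_0[simp]: "hcomp m 0 = 0"
  by (rule poly_mapping_eqI) (simp add: lookup_hcomp)

lemma hcomp_sum: "hcomp m (sum f A) = (\<Sum>a\<in>A. hcomp m (f a))"
  by (induction A rule: infinite_finite_induct) (auto simp: hcomp_add)

lemma hcomp_homog: "homog_of_deg d q \<Longrightarrow> hcomp m q = (if d = m then q else 0)"
  by (rule poly_mapping_eqI)
     (auto simp: lookup_hcomp homog_of_deg_def in_keys_iff)

lemma hcomp_is_homog: "homog_of_deg m (hcomp m p)"
  unfolding homog_of_deg_def by (auto simp: in_keys_iff lookup_hcomp split: if_splits)

lemma hcomp_PQ: "p \<in> PQ Q \<Longrightarrow> hcomp m p \<in> GQ Q m"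
  using keys_hcomp[of m p] hcomp_is_homog[of m p] by (auto simp: GQ_def PQ_def)

lemma hcomp_decomp:
  assumes "finite D" "mon_deg ` ks p \<subseteq> D"
  shows "p = (\<Sum>k\<in>D. hcomp k p)"
proof (rule poly_mapping_eqI)
  fix mon
  have "lk (\<Sum>k\<in>D. hcomp k p) mon = (\<Sum>k\<in>D. if mon_deg mon = k then lk p mon else 0)"
    by (simp add: lookup_sum lookup_hcomp)
  also have "\<dots> = (if mon_deg mon \<in> D then lk p mon else 0)"
    using assms(1) by (simp add: sum.delta' eq_commute[of "mon_deg mon"])
  also have "\<dots> = lk p mon" using assms(2) by (metis image_subset_iff in_keys_iff)
  finally show "lk p mon = lk (\<Sum>k\<in>D. hcomp k p) mon" by simp
qed

lemma hcomp_mult_homog: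
  assumes g: "homog_of_deg e g"
  shows "hcomp m (g * h) = (if e \<le> m then g * hcomp (m - e) h else (0::('a::comm_ring_1) mpoly))"
proof -
  define D where "D = insert (m - e) (mon_deg ` ks h)"
  have fD: "finite D" by (simp add: D_def)
  have "g * h = (\<Sum>k\<in>D. g * hcomp k h)"
    by (subst hcomp_decomp[OF fD, of h]) (auto simp: D_def sum_distrib_left)
  then have "hcomp m (g * h) = (\<Sum>k\<in>D. hcomp m (g * hcomp k h))"
    by (simp add: hcomp_sum)
  also have "\<dots> = (\<Sum>k\<in>D. if e + k = m then g * hcomp k h else 0)"
    by (intro sum.cong refl hcomp_homog homog_mult[OF g hcomp_is_homog])
  also have "\<dots> = (if e \<le> m then g * hcomp (m - e) h else 0)"
  proof (cases "e \<le> m")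
    case True
    have "(\<Sum>k\<in>D. if e + k = m then g * hcomp k h else 0) = (\<Sum>k\<in>D. if k = m - e then g * hcomp k h else 0)"
      using True by (intro sum.cong refl) auto
    also have "\<dots> = g * hcomp (m - e) h" using fD by (simp add: sum.delta' D_def)
    finally show ?thesis using True by simp
  next
    case False
    then show ?thesis by (intro trans[OF sum.neutral]) auto
  qed
  finally show ?thesis .
qed


locale decomp =
  fixes n :: nat and Q :: "nat set" and \<tau> :: "nat \<Rightarrow> ('a::field) mpoly"
  assumes Qn: "Q \<subseteq> {..n}" and tauGQ: "\<And>i. i \<le> n \<Longrightarrow> \<tau> i \<in> GQ Q 1"
    and tauQ: "\<And>i. i \<in> Q \<Longrightarrow> \<tau> i = Xv i"
begin

definition Jk :: "'a mpoly set" where "Jk = {p \<in> polys n. subst \<tau> p = 0}"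

lemma sub_graded: "p \<in> graded_part n m \<Longrightarrow> subst \<tau> p \<in> GQ Q m"
  unfolding graded_GQ by (rule subst_GQ[OF tauGQ]) auto

lemma tauPQ: "i \<le> n \<Longrightarrow> \<tau> i \<in> PQ Q" using tauGQ by (simp add: GQ_def)

lemma sub_polys: "p \<in> polys n \<Longrightarrow> subst \<tau> p \<in> PQ Q"
  unfolding polys_PQ by (rule subst_PQ[OF tauPQ]) auto

lemma sub_id: "p \<in> PQ Q \<Longrightarrow> subst \<tau> p = p"
  by (rule subst_id[OF tauQ])

lemma PQ_polys: "PQ Q \<subseteq> polys n"
  unfolding polys_PQ by (rule PQ_mono[OF Qn])

lemma GQ_graded: "GQ Q m \<subseteq> graded_part n m"
  using PQ_polys by (auto simp: graded_part_def GQ_def)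

lemma sub_sub: "p \<in> polys n \<Longrightarrow> subst \<tau> (subst \<tau> p) = subst \<tau> p"
  by (rule sub_id[OF sub_polys])

lemma diff_Jk: "p \<in> polys n \<Longrightarrow> p - subst \<tau> p \<in> Jk"
  using PQ_polys sub_polys[of p] by (auto simp: Jk_def subst_diff sub_sub polys_PQ intro!: PQ_diff)

lemma Jk_subspace: "V.subspace Jk"
  unfolding V.subspace_def Jk_def
  by (auto simp: subst_add subst_msmult polys_PQ PQ_add PQ_msmult)

lemma Jk_ideal: "is_ideal n Jk"
  unfolding is_ideal_def Jk_def by (auto simp: subst_add subst_mult polys_PQ PQ_add PQ_mult)

lemma graded_subspace: "V.subspace (graded_part n m)"
  unfolding graded_GQ by (rule subspace_GQ)

lemma graded_fin: obtains W :: "'a mpoly set" where "finite W" "graded_part n m \<subseteq> V.span W"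
  using GQ_fin[of "{..n}" m] GQ_span[of "{..n}" m] unfolding graded_GQ by blast

lemma dim_Jk: "V.dim (graded_part n m :: 'a mpoly set) = V.dim (Jk \<inter> graded_part n m) + V.dim (GQ Q m :: 'a mpoly set)"
proof -
  obtain W :: "'a mpoly set" where W: "finite W" "graded_part n m \<subseteq> V.span W" by (rule graded_fin[of m])
  have A: "V.subspace (Jk \<inter> graded_part n m)" by (intro V.subspace_inter Jk_subspace graded_subspace)
  have AB: "(Jk \<inter> graded_part n m) \<inter> GQ Q m \<subseteq> {0}"
    using sub_id by (auto simp: Jk_def GQ_def)
  have "V.dim (Jk \<inter> graded_part n m \<union> GQ Q m) = V.dim (Jk \<inter> graded_part n m) + V.dim (GQ Q m :: 'a mpoly set)"
    by (rule V.dim_union_direct[where W=W, OF W(1) _ _ A subspace_GQ[of Q m] AB]) (use W(2) GQ_graded in blast)+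
  moreover have "V.span (Jk \<inter> graded_part n m \<union> GQ Q m) = graded_part n m"
  proof (rule V.span_subspace)
    show "Jk \<inter> graded_part n m \<union> GQ Q m \<subseteq> graded_part n m" using GQ_graded by blast
    show "V.subspace (graded_part n m)" by (rule graded_subspace)
    show "graded_part n m \<subseteq> V.span (Jk \<inter> graded_part n m \<union> GQ Q m)"
    proof
      fix p :: "'a mpoly" assume p: "p \<in> graded_part n m"
      have pp: "p \<in> polys n" using p by (simp add: graded_part_def)
      have s: "subst \<tau> p \<in> GQ Q m" by (rule sub_graded[OF p])
      have "p - subst \<tau> p \<in> graded_part n m"
        using GQ_diff[of p "{..n}" m "subst \<tau> p"] p GQ_graded s unfolding graded_GQ by blast
      then have "p - subst \<tau> p \<in> Jk \<inter> graded_part n m" using diff_Jk[OF pp] by simp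
      moreover have "p = (p - subst \<tau> p) + subst \<tau> p" by simp
      ultimately show "p \<in> V.span (Jk \<inter> graded_part n m \<union> GQ Q m)"
        using s by (metis UnI1 UnI2 V.span_add V.span_base)
    qed
  qed
  ultimately show ?thesis by (metis V.dim_span)
qed

lemma K_char:
  assumes S: "S \<subseteq> polys n" "gen_ideal n S = Jk" and f: "f \<in> polys n"
  shows "gen_ideal n (insert f S) = {p \<in> polys n. \<exists>h\<in>PQ Q. subst \<tau> p = subst \<tau> f * h}"
    (is "?K = ?K'")
proof
  have "is_ideal n ?K'"
    unfolding is_ideal_def
  proof (intro conjI ballI)
    show "?K' \<subseteq> polys n" by blast
    show "0 \<in> ?K'" by (auto simp: polys_PQ intro: bexI[of _ 0])
    show "p + q \<in> ?K'" if a: "p \<in> ?K'" "q \<in> ?K'" for p q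
    proof -
      obtain h1 h2 where "h1 \<in> PQ Q" "h2 \<in> PQ Q" "subst \<tau> p = subst \<tau> f * h1" "subst \<tau> q = subst \<tau> f * h2"
        using a by blast
      then show ?thesis using a
        by (auto simp: subst_add polys_PQ PQ_add distrib_left intro!: bexI[of _ "h1 + h2"])
    qed
    show "p * q \<in> ?K'" if a: "p \<in> polys n" "q \<in> ?K'" for p q
    proof -
      obtain h where "h \<in> PQ Q" "subst \<tau> q = subst \<tau> f * h" using a by blast
      moreover have "subst \<tau> p \<in> PQ Q" by (rule sub_polys[OF a(1)])
      ultimately show ?thesis using a
        by (auto simp: subst_mult polys_PQ PQ_mult intro!: bexI[of _ "subst \<tau> p * h"])
    qed
  qed
  moreover have "insert f S \<subseteq> ?K'"
  proof -
    have "f \<in> ?K'" using f by (auto intro!: bexI[of _ 1])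
    moreover have "S \<subseteq> ?K'"
    proof
      fix s assume "s \<in> S"
      then have "s \<in> Jk" using gen_ideal_sub[OF S(1)] S(2) by blast
      then show "s \<in> ?K'" by (auto simp: Jk_def intro!: bexI[of _ 0])
    qed
    ultimately show ?thesis by blast
  qed
  ultimately show "?K \<subseteq> ?K'" by (rule gen_ideal_min)
next
  have fS: "insert f S \<subseteq> polys n" using S f by blast
  have KI: "is_ideal n ?K" by (rule gen_ideal_ideal[OF fS])
  have JK: "Jk \<subseteq> ?K" unfolding S(2)[symmetric]
    by (rule gen_ideal_min[OF KI]) (use gen_ideal_sub[OF fS] in blast)
  have fK: "f \<in> ?K" using gen_ideal_sub[OF fS] by blast
  have gK: "subst \<tau> f \<in> ?K"
  proof -
    have "f - (f - subst \<tau> f) \<in> ?K"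
      by (rule ideal_diff[OF KI fK]) (use JK diff_Jk[OF f] in blast)
    then show ?thesis by simp
  qed
  show "?K' \<subseteq> ?K"
  proof clarify
    fix p h assume p: "p \<in> polys n" "h \<in> PQ Q" "subst \<tau> p = subst \<tau> f * h"
    have "p = (p - subst \<tau> p) + h * subst \<tau> f" using p by (simp add: mult.commute)
    also have "\<dots> \<in> ?K"
      using JK diff_Jk[OF p(1)] ideal_mult[OF KI _ gK, of h] p(2) PQ_polys
      by (intro ideal_add[OF KI]) auto
    finally show "p \<in> ?K" .
  qed
qed

lemma dim_K:
  assumes f: "f \<in> graded_part n e" "f \<notin> Jk"
    and K: "K = {p \<in> polys n. \<exists>h\<in>PQ Q. subst \<tau> p = subst \<tau> f * h}"
  shows "V.dim (K \<inter> graded_part n m) = V.dim (Jk \<inter> graded_part n m) + (if e \<le> m then V.dim (GQ Q (m - e) :: 'a mpoly set) else 0)"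
proof -
  define g where "g = subst \<tau> f"
  have fp: "f \<in> polys n" using f by (simp add: graded_part_def)
  have gG: "g \<in> GQ Q e" using sub_graded[OF f(1)] by (simp add: g_def)
  have g0: "g \<noteq> 0" using f fp by (simp add: g_def Jk_def)
  have ghom: "homog_of_deg e g" using gG by (simp add: GQ_def)
  obtain W :: "'a mpoly set" where W: "finite W" "graded_part n m \<subseteq> V.span W" by (rule graded_fin[of m])
  have A: "V.subspace (Jk \<inter> graded_part n m)" by (intro V.subspace_inter Jk_subspace graded_subspace)
  have KJ: "Jk \<subseteq> K" unfolding K Jk_def by (auto intro!: bexI[of _ 0])
  show ?thesis
  proof (cases "e \<le> m")
    case False
    have "K \<inter> graded_part n m = Jk \<inter> graded_part n m"
    proof
      show "K \<inter> graded_part n m \<subseteq> Jk \<inter> graded_part n m"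
      proof clarify
        fix p :: "'a mpoly" assume p: "p \<in> K" "p \<in> graded_part n m"
        obtain h where h: "h \<in> PQ Q" "subst \<tau> p = g * h" using p K by (auto simp: g_def)
        have "subst \<tau> p = hcomp m (subst \<tau> p)"
          using sub_graded[OF p(2)] hcomp_homog[of m "subst \<tau> p" m] by (simp add: GQ_def)
        also have "\<dots> = 0" using h(2) hcomp_mult_homog[OF ghom, of m h] False by simp
        finally show "p \<in> Jk" using p(2) by (simp add: Jk_def graded_part_def)
      qed
    qed (use KJ in blast)
    then show ?thesis using False by simp
  next
    case True
    define Wm where "Wm = (\<lambda>h. g * h) ` GQ Q (m - e)"
    have WmG: "Wm \<subseteq> GQ Q m"
    proof
      fix w assume "w \<in> Wm"
      then obtain h where h: "h \<in> GQ Q (m - e)" "w = g * h" by (auto simp: Wm_def)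
      have "g * h \<in> GQ Q (e + (m - e))" by (rule GQ_mult[OF gG h(1)])
      then show "w \<in> GQ Q m" using True h(2) by simp
    qed
    have Wsub: "V.subspace Wm"
      unfolding Wm_def V.subspace_def
    proof (intro conjI ballI allI)
      show "0 \<in> (*) g ` GQ Q (m - e)" by (rule image_eqI[of _ _ 0]) auto
      show "x + y \<in> (*) g ` GQ Q (m - e)" if "x \<in> (*) g ` GQ Q (m - e)" "y \<in> (*) g ` GQ Q (m - e)" for x y
        using that by (auto simp: distrib_left[symmetric] intro!: imageI GQ_add)
      show "msmult c x \<in> (*) g ` GQ Q (m - e)" if "x \<in> (*) g ` GQ Q (m - e)" for c x
        using that by (auto simp: msmult_eq_mconst mult.left_commute intro!: imageI GQ_msmult[unfolded msmult_eq_mconst])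
    qed
    have dimW: "V.dim Wm = V.dim (GQ Q (m - e) :: 'a mpoly set)"
      unfolding Wm_def
    proof (rule V_dim_inj_image)
      show "g * (x + y) = g * x + g * y" for x y by (simp add: distrib_left)
      show "g * msmult c x = msmult c (g * x)" for c x by (simp add: msmult_eq_mconst mult.left_commute)
      show "inj_on ((*) g) (GQ Q (m - e))" using g0 by (auto simp: inj_on_def)
    qed (rule subspace_GQ)
    have AB: "(Jk \<inter> graded_part n m) \<inter> Wm \<subseteq> {0}"
      using WmG sub_id by (auto simp: Jk_def GQ_def)
    have "V.dim (Jk \<inter> graded_part n m \<union> Wm) = V.dim (Jk \<inter> graded_part n m) + V.dim Wm"
      by (rule V.dim_union_direct[where W=W, OF W(1) _ _ A Wsub AB]) (use W(2) WmG GQ_graded in blast)+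
    moreover have "V.span (Jk \<inter> graded_part n m \<union> Wm) = K \<inter> graded_part n m"
    proof (rule V.span_subspace)
      show "Jk \<inter> graded_part n m \<union> Wm \<subseteq> K \<inter> graded_part n m"
      proof -
        have "Wm \<subseteq> K"
        proof
          fix w assume w: "w \<in> Wm"
          then obtain h where h: "h \<in> GQ Q (m - e)" "w = g * h" by (auto simp: Wm_def)
          have "w \<in> PQ Q" using w WmG by (auto simp: GQ_def)
          then show "w \<in> K" using PQ_polys h sub_id[of w] unfolding K
            by (auto simp: g_def GQ_def)
        qed
        then show ?thesis using KJ WmG GQ_graded by blast
      qed
      show "V.subspace (K \<inter> graded_part n m)"
      proof (rule V.subspace_inter[OF _ graded_subspace])
        show "V.subspace K"
          unfolding K V.subspace_def
        proof (intro conjI ballI allI)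
          show "0 \<in> {p \<in> polys n. \<exists>h\<in>PQ Q. subst \<tau> p = subst \<tau> f * h}"
            by (auto simp: polys_PQ intro!: bexI[of _ 0])
          show "x + y \<in> {p \<in> polys n. \<exists>h\<in>PQ Q. subst \<tau> p = subst \<tau> f * h}"
            if a: "x \<in> {p \<in> polys n. \<exists>h\<in>PQ Q. subst \<tau> p = subst \<tau> f * h}"
               "y \<in> {p \<in> polys n. \<exists>h\<in>PQ Q. subst \<tau> p = subst \<tau> f * h}" for x y
          proof -
            obtain h1 h2 where "h1 \<in> PQ Q" "h2 \<in> PQ Q" "subst \<tau> x = subst \<tau> f * h1" "subst \<tau> y = subst \<tau> f * h2"
              using a by blast
            then show ?thesis using a
              by (auto simp: subst_add polys_PQ PQ_add distrib_left intro!: bexI[of _ "h1 + h2"])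
          qed
          show "msmult c x \<in> {p \<in> polys n. \<exists>h\<in>PQ Q. subst \<tau> p = subst \<tau> f * h}"
            if a: "x \<in> {p \<in> polys n. \<exists>h\<in>PQ Q. subst \<tau> p = subst \<tau> f * h}" for c x
          proof -
            obtain h where h: "h \<in> PQ Q" "subst \<tau> x = subst \<tau> f * h" using a by blast
            have "subst \<tau> (msmult c x) = subst \<tau> f * msmult c h"
              unfolding subst_msmult h(2) by (simp add: msmult_eq_mconst mult.left_commute)
            moreover have "msmult c x \<in> polys n" using a by (simp add: polys_PQ PQ_msmult)
            moreover have "msmult c h \<in> PQ Q" using h(1) by (simp add: PQ_msmult)
            ultimately show ?thesis by blast
          qed
        qed
      qed
      show "K \<inter> graded_part n m \<subseteq> V.span (Jk \<inter> graded_part n m \<union> Wm)"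
      proof
        fix p :: "'a mpoly" assume p: "p \<in> K \<inter> graded_part n m"
        have pp: "p \<in> polys n" using p by (simp add: graded_part_def)
        obtain h where h: "h \<in> PQ Q" "subst \<tau> p = g * h" using p K by (auto simp: g_def)
        have s: "subst \<tau> p \<in> GQ Q m" by (rule sub_graded) (use p in blast)
        have "subst \<tau> p = hcomp m (subst \<tau> p)"
          using s hcomp_homog[of m "subst \<tau> p" m] by (simp add: GQ_def)
        also have "\<dots> = g * hcomp (m - e) h" using h(2) hcomp_mult_homog[OF ghom, of m h] True by simp
        finally have sW: "subst \<tau> p \<in> Wm" using hcomp_PQ[OF h(1)] by (auto simp: Wm_def)
        have "p - subst \<tau> p \<in> graded_part n m"
          using GQ_diff[of p "{..n}" m "subst \<tau> p"] p GQ_graded s unfolding graded_GQ by blast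
        then have "p - subst \<tau> p \<in> Jk \<inter> graded_part n m" using diff_Jk[OF pp] by simp
        then have a1: "p - subst \<tau> p \<in> V.span (Jk \<inter> graded_part n m \<union> Wm)"
          by (intro V.span_base) blast
        have a2: "subst \<tau> p \<in> V.span (Jk \<inter> graded_part n m \<union> Wm)"
          using sW by (intro V.span_base) blast
        have "(p - subst \<tau> p) + subst \<tau> p \<in> V.span (Jk \<inter> graded_part n m \<union> Wm)"
          by (rule V.span_add[OF a1 a2])
        then show "p \<in> V.span (Jk \<inter> graded_part n m \<union> Wm)" by simp
      qed
    qed
    note E = calculation this
    have "V.dim (K \<inter> graded_part n m) = V.dim (Jk \<inter> graded_part n m \<union> Wm)"
      using E(2) V.dim_span[of "Jk \<inter> graded_part n m \<union> Wm"] by simp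
    then show ?thesis using E(1) True dimW by simp
  qed
qed

end


definition Bp :: "rat \<Rightarrow> nat \<Rightarrow> rat poly" where
  "Bp c k = smult (1 / fact k) (\<Prod>i<k. [:c - of_nat i, 1:])"

lemma poly_Bp: "poly (Bp c k) x = (x + c) gchoose k"
  by (simp add: Bp_def gbinomial_prod_rev poly_prod atLeast0LessThan algebra_simps)

lemma mult_lin: "(p :: 'a::comm_ring_1 poly) * [:a, 1:] = smult a p + pCons 0 p"
  by (simp add: mult_pCons_right smult_1_left)

lemma coeff_prod_lin_high: "j > k \<Longrightarrow> coeff (\<Prod>i<k. [:a i, 1:]) j = 0"
proof (induction k arbitrary: j)
  case 0 then show ?case by (simp add: coeff_1 )
next
  case (Suc k)
  then obtain j' where j: "j = Suc j'" "j' > k" by (cases j) auto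
  show ?case using Suc.IH[of j] Suc.IH[of j'] j Suc.prems
    by (simp add: prod.lessThan_Suc mult_lin)
qed

lemma coeff_prod_lin_top: "coeff (\<Prod>i<k. [:a i, 1:]) k = 1"
proof (induction k)
  case 0 then show ?case by simp
next
  case (Suc k)
  then show ?case using coeff_prod_lin_high[where j="Suc k" and k=k and a=a]
    by (simp add: prod.lessThan_Suc mult_lin)
qed

lemma coeff_mult_lin: "coeff ((P :: 'a::comm_ring_1 poly) * [:c, 1:]) (Suc k) = c * coeff P (Suc k) + coeff P k"
  by (simp add: mult_lin)

lemma coeff_prod_lin_sub: "coeff (\<Prod>i<Suc k. [:a i, 1:]) k = (\<Sum>i<Suc k. (a i :: 'a::comm_ring_1))"
proof (induction k)
  case 0 then show ?case by simp
next
  case (Suc k)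
  have "coeff (\<Prod>i<Suc (Suc k). [:a i, 1:]) (Suc k)
      = a (Suc k) * coeff (\<Prod>i<Suc k. [:a i, 1:]) (Suc k) + coeff (\<Prod>i<Suc k. [:a i, 1:]) k"
    by (simp only: prod.lessThan_Suc[of _ "Suc k"] coeff_mult_lin)
  also have "\<dots> = a (Suc k) + (\<Sum>i<Suc k. a i)"
    using coeff_prod_lin_top[where k="Suc k" and a=a] Suc.IH by simp
  finally show ?case by (simp add: add.commute)
qed

lemma coeff_Bp: "coeff (Bp c (Suc d)) d = (1 / fact (Suc d)) * (\<Sum>i<Suc d. c - of_nat i)"
  unfolding Bp_def coeff_smult by (simp only: coeff_prod_lin_sub)

lemma coeff_Bp_diff:
  "coeff (Bp c1 (Suc d) - Bp c2 (Suc d)) d = (c1 - c2) / fact d"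
proof -
  have "coeff (Bp c1 (Suc d) - Bp c2 (Suc d)) d
     = (1 / fact (Suc d)) * ((\<Sum>i<Suc d. c1 - of_nat i) - (\<Sum>i<Suc d. c2 - of_nat i))"
    by (simp only: coeff_diff coeff_Bp right_diff_distrib)
  also have "(\<Sum>i<Suc d. c1 - of_nat i) - (\<Sum>i<Suc d. c2 - of_nat i) = (\<Sum>i<Suc d. c1 - c2)"
    by (subst sum_subtractf[symmetric]) simp
  also have "\<dots> = of_nat (Suc d) * (c1 - c2)" by (simp only: sum_constant card_lessThan of_nat_id)
  finally have X: "coeff (Bp c1 (Suc d) - Bp c2 (Suc d)) d = (1 / fact (Suc d)) * (of_nat (Suc d) * (c1 - c2))" .
  have "(1 / fact (Suc d)) * (of_nat (Suc d) * (c1 - c2)) = (c1 - c2) / (fact d :: rat)"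
  proof -
    have S: "(of_nat (Suc d) :: rat) \<noteq> 0" by (simp only: of_nat_eq_0_iff)
    have F: "(fact d :: rat) \<noteq> 0" by simp
    show ?thesis by (simp only: fact_Suc) (simp add: S F divide_simps del: of_nat_Suc)
  qed
  with X show ?thesis by simp
qed

lemma gchoose_int:
  fixes a :: rat
  assumes "k \<ge> 1" "\<And>m. m \<ge> M \<Longrightarrow> (a + of_nat m) gchoose k \<in> \<int>"
  shows "a \<in> \<int>"
  using assms
proof (induction k rule: nat_induct_at_least)
  case base
  then have "a + of_nat M \<in> \<int>" by (metis gbinomial_1 order_refl)
  then have "a + of_nat M - of_nat M \<in> \<int>" by (intro Ints_diff) auto
  then show ?case by simp
next
  case (Suc k)
  show ?case
  proof (rule Suc.IH)
    fix m assume m: "m \<ge> M"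
    have "(a + of_nat m) gchoose k = ((a + of_nat (Suc m)) gchoose (Suc k)) - ((a + of_nat m) gchoose (Suc k))"
      using gbinomial_Suc_Suc[of "a + of_nat m" k] by (simp add: algebra_simps)
    also have "\<dots> \<in> \<int>" using Suc.prems[of "Suc m"] Suc.prems[of m] m by (intro Ints_diff) auto
    finally show "(a + of_nat m) gchoose k \<in> \<int>" .
  qed
qed

lemma hilbert_poly_eqI:
  assumes "\<And>m. m \<ge> M \<Longrightarrow> of_nat (hilbert_fun n I m) = poly P (of_nat m)"
  shows "hilbert_poly n I = P"
  unfolding hilbert_poly_def
proof (rule the_equality)
  show "\<forall>\<^sub>F m in sequentially. of_nat (hilbert_fun n I m) = poly P (of_nat m)"
    using assms by (auto simp: eventually_sequentially)
next
  fix P' :: "rat poly" assume "\<forall>\<^sub>F m in sequentially. of_nat (hilbert_fun n I m) = poly P' (of_nat m)"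
  then obtain M' where M': "\<And>m. m \<ge> M' \<Longrightarrow> of_nat (hilbert_fun n I m) = poly P' (of_nat m)"
    by (auto simp: eventually_sequentially)
  show "P' = P"
  proof (rule ccontr)
    assume ne: "P' \<noteq> P"
    then have fin: "finite {x. poly (P' - P) x = 0}" by (intro poly_roots_finite) simp
    have "of_nat ` {max M M'..} \<subseteq> {x. poly (P' - P) x = 0}"
    proof
      fix y assume "y \<in> (of_nat ` {max M M'..} :: rat set)"
      then obtain x where x: "x \<ge> max M M'" "y = of_nat x" by auto
      then show "y \<in> {x. poly (P' - P) x = 0}" using assms[of x] M'[of x] by simp
    qed
    moreover have "infinite (of_nat ` {max M M'..} :: rat set)"
    proof
      assume "finite (of_nat ` {max M M'..} :: rat set)"
      moreover have "inj_on (of_nat :: nat \<Rightarrow> rat) {max M M'..}" by (simp add: inj_on_def)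
      ultimately have "finite {max M M'..}" by (rule finite_imageD)
      then show False using infinite_Ici by blast
    qed
    ultimately show False using fin finite_subset by blast
  qed
qed


lemma eval_Xv: "eval_mp \<phi> (Xv i) x = \<phi> 1 * x i"
  by (simp add: eval_mp_def Xv_def)

lemma no_all_vars:
  assumes "is_alg_closure \<phi>" "has_proj_dim n \<phi> I d"
  shows "\<not> (\<forall>i\<le>n. Xv i \<in> I)"
proof
  assume all: "\<forall>i\<le>n. Xv i \<in> I"
  have phi1: "\<phi> 1 = 1" using assms(1) by (simp add: is_alg_closure_def is_field_emb_def)
  obtain Z where "irred_chain n (proj_variety n \<phi> I) d Z" using assms(2) by (auto simp: has_proj_dim_def)
  then have "Z 0 \<noteq> {}" "Z 0 \<subseteq> proj_variety n \<phi> I"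
    by (auto simp: irred_chain_def zariski_irreducible_def)
  then obtain x where x: "x \<in> proj_variety n \<phi> I" by blast
  then obtain i where i: "i \<le> n" "x i \<noteq> 0" by (auto simp: proj_variety_def proj_pts_def)
  have "eval_mp \<phi> (Xv i) x = 0" using x all i by (auto simp: proj_variety_def)
  then show False using i phi1 by (simp add: eval_Xv)
qed

lemma graded0: "p \<in> graded_part n 0 \<Longrightarrow> p = mconst (lk p 0)"
proof (rule poly_mapping_eqI)
  fix mon assume p: "p \<in> graded_part n 0"
  show "lk p mon = lk (mconst (lk p 0)) mon"
  proof (cases "mon \<in> ks p")
    case True
    then have "mon = 0" using p by (auto simp: graded_part_def homog_of_deg_def mon_deg_0_iff)
    then show ?thesis by (simp add: mconst_def)
  next
    case False
    then show ?thesis by (auto simp: mconst_def lookup_single' in_keys_iff)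
  qed
qed

lemma const_in_ideal:
  assumes I: "is_ideal n (I :: ('a::field) mpoly set)" and c: "mconst c \<in> I" "c \<noteq> 0"
  shows "\<forall>i\<le>n. Xv i \<in> I"
proof (intro allI impI)
  fix i assume i: "i \<le> n"
  have "(Xv i * mconst (inverse c)) * mconst c \<in> I"
    by (rule ideal_mult[OF I _ c(1)]) (simp add: polys_PQ Xv_polys[OF i, unfolded polys_PQ] mconst_polys[unfolded polys_PQ] PQ_mult)
  moreover have "(Xv i * mconst (inverse c)) * mconst c = Xv i"
    using c(2) by (simp add: mconst_def mult.assoc mult_single)
  ultimately show "Xv i \<in> I" by simp
qed

lemma dim_GQ_d: "finite Q \<Longrightarrow> card Q = d + 2 \<Longrightarrow> V.dim (GQ Q m :: ('a::field) mpoly set) = (m + d + 1) choose (d + 1)"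
proof -
  assume "finite Q" "card Q = d + 2"
  then have "V.dim (GQ Q m :: 'a mpoly set) = (m + d + 1) choose m" by (simp add: dim_GQ algebra_simps)
  also have "\<dots> = (m + d + 1) choose (d + 1)" using binomial_symmetric[of m "m + d + 1"] by simp
  finally show ?thesis .
qed

lemma ibinom_nat: "ibinom (of_nat (m + d + 1)) (d + 1) = of_nat ((m + d + 1) choose (d + 1))"
proof -
  have "\<not> (of_nat (m + d + 1) :: rat) < of_nat (d + 1)" by (simp only: of_nat_less_iff)
  then show ?thesis unfolding ibinom_def by (simp only: if_False binomial_gbinomial)
qed

lemma ibinom_eval:
  "ibinom (of_nat m - of_nat e + of_nat d + 1) (d + 1) = (if e \<le> m then of_nat ((m - e + d + 1) choose (d + 1)) else 0)"
proof (cases "e \<le> m")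
  case True
  then have eq: "(of_nat m - of_nat e + of_nat d + 1 :: rat) = of_nat (m - e + d + 1)" by (simp add: of_nat_diff)
  have "\<not> (of_nat (m - e + d + 1) :: rat) < of_nat (d + 1)" by (simp only: of_nat_less_iff)
  then show ?thesis using True unfolding ibinom_def eq by (simp only: if_False if_True binomial_gbinomial)
next
  case False
  then have "(of_nat m - of_nat e + of_nat d + 1 :: rat) < of_nat (d + 1)" by simp
  then show ?thesis using False by (simp add: ibinom_def)
qed

lemma graded_fin': obtains W :: "('a::field) mpoly set" where "finite W" "graded_part n m \<subseteq> V.span W"
  using GQ_fin[of "{..n}" m] GQ_span[of "{..n}" m] unfolding graded_GQ by blast

lemma graded_subspace': "V.subspace (graded_part n m :: ('a::field) mpoly set)"
  unfolding graded_GQ by (rule subspace_GQ)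

lemma dim_ideal_le: "V.dim ((I :: ('a::field) mpoly set) \<inter> graded_part n m) \<le> V.dim (graded_part n m :: ('a::field) mpoly set)"
proof -
  obtain W :: "'a mpoly set" where W: "finite W" "graded_part n m \<subseteq> V.span W" by (rule graded_fin')
  show ?thesis by (rule V.dim_le_fd[OF W]) (use V.span_superset in blast)
qed

lemma hilbert_poly_value:
  assumes "e \<ge> 1" "\<And>m. m \<ge> e \<Longrightarrow> hilbert_fun n I m = ((m + d + 1) choose (d + 1)) - ((m - e + d + 1) choose (d + 1))"
  shows "ideal_degree n I d = of_nat e"
proof -
  let ?P = "Bp (of_nat d + 1) (Suc d) - Bp (of_nat d + 1 - of_nat e) (Suc d)"
  have "hilbert_poly n I = ?P"
  proof (rule hilbert_poly_eqI)
    fix m assume m: "e \<le> m"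
    have le: "(m - e + d + 1) choose (d + 1) \<le> (m + d + 1) choose (d + 1)" by (rule binomial_right_mono) simp
    have "of_nat (hilbert_fun n I m) = of_nat ((m + d + 1) choose (d + 1)) - (of_nat ((m - e + d + 1) choose (d + 1)) :: rat)"
      using assms(2)[OF m] le by (simp add: of_nat_diff)
    also have "\<dots> = (of_nat (m + d + 1) gchoose (d + 1)) - (of_nat (m - e + d + 1) gchoose (d + 1))"
      by (simp only: binomial_gbinomial)
    also have "\<dots> = poly ?P (of_nat m)"
    proof -
      have "(of_nat (m - e + d + 1) :: rat) = of_nat m + (of_nat d + 1 - of_nat e)" using m by (simp add: of_nat_diff)
      moreover have "(of_nat (m + d + 1) :: rat) = of_nat m + (of_nat d + 1)" by simp
      ultimately show ?thesis by (simp only: poly_diff poly_Bp Suc_eq_plus1)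
    qed
    finally show "of_nat (hilbert_fun n I m) = poly ?P (of_nat m)" .
  qed
  then show ?thesis unfolding ideal_degree_def by (simp only: coeff_Bp_diff) simp
qed


lemma decomposition':
  fixes u :: "nat \<Rightarrow> ('a::field) mpoly"
  assumes u: "lin_indep_linear_forms n r u"
  obtains Q and \<tau> :: "nat \<Rightarrow> 'a mpoly" where "Q \<subseteq> {..n}" "card Q + r = n + 1"
    "\<forall>i\<le>n. \<tau> i \<in> GQ Q 1" "\<forall>i\<in>Q. \<tau> i = Xv i"
    "gen_ideal n (u ` {..<r}) = {p \<in> polys n. subst \<tau> p = 0}"
proof (rule decomposition[OF u])
  fix Q and \<tau> :: "nat \<Rightarrow> 'a mpoly"
  assume a: "Q \<subseteq> {..n}" "card Q + r = n + 1" "\<And>i. i \<le> n \<Longrightarrow> \<tau> i \<in> GQ Q 1"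
    "\<And>i. i \<in> Q \<Longrightarrow> \<tau> i = Xv i" "gen_ideal n (u ` {..<r}) = {p \<in> polys n. subst \<tau> p = 0}"
  show thesis by (rule that[of Q \<tau>]) (use a in auto)
qed

lemma hilbert_from_decomp:
  fixes I :: "('a::field) mpoly set"
  assumes D: "decomp n Q \<tau>" and cQ: "card Q = d + 2"
    and f: "f \<in> graded_part n e" "f \<notin> decomp.Jk n \<tau>"
    and K: "I = {p \<in> polys n. \<exists>h\<in>PQ Q. subst \<tau> p = subst \<tau> f * h}"
  shows "hilbert_fun n I m = ((m + d + 1) choose (d + 1)) - (if e \<le> m then (m - e + d + 1) choose (d + 1) else 0)"
    and "V.dim (I \<inter> graded_part n m) + ((m + d + 1) choose (d + 1)) = (if e \<le> m then (m - e + d + 1) choose (d + 1) else 0) + V.dim (graded_part n m :: 'a mpoly set)"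
proof -
  interpret decomp n Q \<tau> by (rule D)
  have fQ: "finite Q" using Qn finite_subset by blast
  have G: "V.dim (GQ Q k :: 'a mpoly set) = (k + d + 1) choose (d + 1)" for k
    by (rule dim_GQ_d[OF fQ cQ])
  have d1: "V.dim (graded_part n m :: 'a mpoly set) = V.dim (Jk \<inter> graded_part n m) + ((m + d + 1) choose (d + 1))"
    using dim_Jk[of m] G[of m] by simp
  have d2: "V.dim (I \<inter> graded_part n m) = V.dim (Jk \<inter> graded_part n m) + (if e \<le> m then (m - e + d + 1) choose (d + 1) else 0)"
    using dim_K[OF f K, of m] G[of "m - e"] by (simp add: algebra_simps)
  show "hilbert_fun n I m = ((m + d + 1) choose (d + 1)) - (if e \<le> m then (m - e + d + 1) choose (d + 1) else 0)"
    unfolding hilbert_fun_def d1 d2 by (simp only: add_diff_cancel_left)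
  show "V.dim (I \<inter> graded_part n m) + ((m + d + 1) choose (d + 1)) = (if e \<le> m then (m - e + d + 1) choose (d + 1) else 0) + V.dim (graded_part n m :: 'a mpoly set)"
    unfolding d1 d2 by (simp only: ac_simps)
qed

lemma rhs_to_lhs:
  fixes I :: "('a::field) mpoly set"
  assumes noall: "\<not> (\<forall>i\<le>n. Xv i \<in> I)" and dn: "d < n"
    and u: "lin_indep_linear_forms n (n - d - 1) u"
    and f: "f \<in> polys n" "homogeneous f" "f \<notin> gen_ideal n (u ` {..<n - d - 1})"
    and I: "I = gen_ideal n (insert f (u ` {..<n - d - 1}))"
  shows "\<forall>m\<ge>1. of_nat (hilbert_fun n I m) = ibinom (of_nat (m + d + 1)) (d + 1)
              - ibinom (of_nat m - ideal_degree n I d + of_nat d + 1) (d + 1)"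
proof -
  let ?U = "u ` {..<n - d - 1}"
  obtain Q and \<tau> :: "nat \<Rightarrow> 'a mpoly" where Q: "Q \<subseteq> {..n}" "card Q + (n - d - 1) = n + 1"
    "\<forall>i\<le>n. \<tau> i \<in> GQ Q 1" "\<forall>i\<in>Q. \<tau> i = Xv i"
    "gen_ideal n ?U = {p \<in> polys n. subst \<tau> p = 0}"
    by (rule decomposition'[OF u])
  interpret decomp n Q \<tau> by unfold_locales (use Q in auto)
  have cQ: "card Q = d + 2" using Q(2) dn by simp
  have JU: "gen_ideal n ?U = Jk" using Q(5) by (simp add: Jk_def)
  have Upolys: "?U \<subseteq> polys n" using lin_indep_props(3)[OF u] by (auto simp: graded_part_def)
  obtain e where fe: "homog_of_deg e f" using f(2) by (auto simp: homogeneous_def)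
  have fR: "f \<in> graded_part n e" using f(1) fe by (simp add: graded_part_def)
  have fJ: "f \<notin> Jk" using f(3) JU by simp
  have IK: "I = {p \<in> polys n. \<exists>h\<in>PQ Q. subst \<tau> p = subst \<tau> f * h}"
    using K_char[OF Upolys JU f(1)] I by simp
  have Iid: "is_ideal n I" unfolding I by (rule gen_ideal_ideal) (use Upolys f(1) in blast)
  have fI: "f \<in> I" unfolding I using gen_ideal_sub[of "insert f ?U" n] Upolys f(1) by blast
  have e1: "e \<ge> 1"
  proof (rule ccontr)
    assume "\<not> 1 \<le> e"
    then have "e = 0" by simp
    then have "f \<in> graded_part n 0" using fR by simp
    then have fc: "f = mconst (lk f 0)" by (rule graded0)
    have "0 \<in> Jk" by (simp add: Jk_def polys_PQ)
    then have "f \<noteq> 0" using fJ by metis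
    then have "lk f 0 \<noteq> 0" using fc by (auto simp: mconst_def)
    moreover have "mconst (lk f 0) \<in> I" using fI fc by simp
    ultimately have "\<forall>i\<le>n. Xv i \<in> I" using const_in_ideal[OF Iid] by blast
    with noall show False by blast
  qed
  have hf: "hilbert_fun n I m = ((m + d + 1) choose (d + 1)) - (if e \<le> m then (m - e + d + 1) choose (d + 1) else 0)" for m
    by (rule hilbert_from_decomp(1)[OF decomp_axioms cQ fR fJ IK])
  have deg: "ideal_degree n I d = of_nat e"
    by (rule hilbert_poly_value[OF e1]) (simp add: hf)
  show ?thesis
  proof (intro allI impI)
    fix m :: nat assume "m \<ge> 1"
    have le: "(if e \<le> m then (m - e + d + 1) choose (d + 1) else 0) \<le> (m + d + 1) choose (d + 1)"
      using binomial_right_mono[of "m - e + d + 1" "m + d + 1" "d + 1"] by auto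
    show "of_nat (hilbert_fun n I m) = ibinom (of_nat (m + d + 1)) (d + 1)
              - ibinom (of_nat m - ideal_degree n I d + of_nat d + 1) (d + 1)"
      unfolding deg ibinom_nat ibinom_eval hf using le by (simp add: of_nat_diff)
  qed
qed


lemma lhs_to_rhs:
  fixes I :: "('a::field) mpoly set"
  assumes hI: "homogeneous_ideal n I" and noall: "\<not> (\<forall>i\<le>n. Xv i \<in> I)" and dn: "d < n"
    and L: "\<forall>m\<ge>1. of_nat (hilbert_fun n I m) = ibinom (of_nat (m + d + 1)) (d + 1)
              - ibinom (of_nat m - ideal_degree n I d + of_nat d + 1) (d + 1)"
  shows "\<exists>u f. lin_indep_linear_forms n (n - d - 1) u
            \<and> f \<in> polys n \<and> homogeneous f
            \<and> f \<notin> gen_ideal n (u ` {..<n - d - 1})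
            \<and> I = gen_ideal n (insert f (u ` {..<n - d - 1}))"
proof -
  define E where "E = ideal_degree n I d"
  define r where "r = n - d - 1"
  have Iid: "is_ideal n I" and Ih: "\<And>p m. p \<in> I \<Longrightarrow> hcomp m p \<in> I"
    using hI by (auto simp: homogeneous_ideal_def)
  have Ipolys: "I \<subseteq> polys n" using Iid by (simp add: is_ideal_def)
  have L': "of_nat (hilbert_fun n I m) = of_nat ((m + d + 1) choose (d + 1)) - ibinom (of_nat m - E + of_nat d + 1) (d + 1)"
    if "m \<ge> 1" for m
    using L[rule_format, OF that] by (simp only: E_def ibinom_nat)
  have dimR: "V.dim (I \<inter> graded_part n m) + hilbert_fun n I m = V.dim (graded_part n m :: 'a mpoly set)" for m
    using dim_ideal_le[of I n m] by (simp add: hilbert_fun_def)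
  have allX: False if "graded_part n 1 \<subseteq> I" 
  proof -
    have "\<forall>i\<le>n. Xv i \<in> I" using that Xv_graded by blast
    with noall show False by blast
  qed
  obtain M0 :: nat where M0: "E \<le> of_nat M0" using real_arch_simple by blast
  define M where "M = M0 + 1"
  have EZ: "E \<in> \<int>"
  proof -
    have "(- E + of_nat d + 1 + of_nat m) gchoose (d + 1) \<in> \<int>" if m: "m \<ge> M" for m
    proof -
      have m1: "m \<ge> 1" using m by (simp add: M_def)
      have "(of_nat M0 :: rat) \<le> of_nat m" using m by (simp add: M_def)
      then have "E \<le> of_nat m" using M0 by (rule order_trans[rotated])
      then have "\<not> (of_nat m - E + of_nat d + 1) < of_nat (d + 1)" by simp
      then have A: "ibinom (of_nat m - E + of_nat d + 1) (d + 1) = (of_nat m - E + of_nat d + 1) gchoose (d + 1)"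
        by (simp only: ibinom_def if_False)
      have B: "ibinom (of_nat m - E + of_nat d + 1) (d + 1) = of_nat ((m + d + 1) choose (d + 1)) - of_nat (hilbert_fun n I m)"
        using L'[OF m1] by linarith
      have X: "(of_nat m - E + of_nat d + 1) gchoose (d + 1) = of_nat ((m + d + 1) choose (d + 1)) - (of_nat (hilbert_fun n I m) :: rat)"
        by (rule trans[OF A[symmetric] B])
      have eq1: "(- E + of_nat d + 1 + of_nat m) = (of_nat m - E + of_nat d + 1)" by (simp add: algebra_simps)
      show ?thesis unfolding eq1 X by (intro Ints_diff Ints_of_nat)
    qed
    note G = this
    have "- E + of_nat d + 1 \<in> \<int>" by (rule gchoose_int[of "d + 1" M]) (simp, erule G)
    then have "(of_nat d + 1) - (- E + of_nat d + 1) \<in> \<int>" by (intro Ints_diff) auto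
    then show ?thesis by simp
  qed
  then obtain z where Ez: "E = of_int z" by (auto elim: Ints_cases)
  have z1: "z \<ge> 1"
  proof (rule ccontr)
    assume "\<not> z \<ge> 1"
    then have z0: "z \<le> 0" by simp
    define N where "N = nat (int d + 2 - z)"
    have N: "(of_nat N :: rat) = of_nat 1 - E + of_nat d + 1" using z0 by (simp add: N_def Ez)
    have Nd: "d + 2 \<le> N" using z0 by (simp add: N_def)
    have "ibinom (of_nat 1 - E + of_nat d + 1) (d + 1) = of_nat (N choose (d + 1))"
    proof -
      have "\<not> (of_nat N :: rat) < of_nat (d + 1)" using Nd by (simp only: of_nat_less_iff)
      then show ?thesis unfolding ibinom_def N[symmetric] by (simp only: if_False binomial_gbinomial)
    qed
    moreover have "N choose (d + 1) \<ge> Suc (d + 1) choose (d + 1)"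
      by (rule binomial_right_mono) (use Nd in simp)
    ultimately have "of_nat (hilbert_fun n I 1) \<le> (of_nat ((1 + d + 1) choose (d + 1)) - of_nat (Suc (d + 1) choose (d + 1)) :: rat)"
      using L'[of 1] by simp
    also have "\<dots> = 0" by simp
    finally have h0: "hilbert_fun n I 1 = 0" by simp
    obtain W :: "'a mpoly set" where W: "finite W" "graded_part n 1 \<subseteq> V.span W" by (rule graded_fin')
    have "graded_part n 1 \<subseteq> I \<inter> graded_part n 1"
    proof (rule V.subspace_eq_dim[OF W])
      show "V.subspace (I \<inter> graded_part n 1)" by (intro V.subspace_inter ideal_subspace[OF Iid] graded_subspace')
      show "I \<inter> graded_part n 1 \<subseteq> graded_part n 1" by blast
      show "V.dim (graded_part n 1 :: 'a mpoly set) \<le> V.dim (I \<inter> graded_part n 1)" using dimR[of 1] h0 by simp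
    qed
    then show False using allX by blast
  qed
  define e where "e = nat z"
  have e1: "e \<ge> 1" and Ee: "E = of_nat e" using z1 by (auto simp: e_def Ez)
  have Hn: "hilbert_fun n I m = ((m + d + 1) choose (d + 1)) - (if e \<le> m then (m - e + d + 1) choose (d + 1) else 0)"
    if m: "m \<ge> 1" for m
  proof -
    have le: "(if e \<le> m then (m - e + d + 1) choose (d + 1) else 0) \<le> (m + d + 1) choose (d + 1)"
      using binomial_right_mono[of "m - e + d + 1" "m + d + 1" "d + 1"] by auto
    have "(of_nat (hilbert_fun n I m) :: rat) = of_nat ((m + d + 1) choose (d + 1)) - of_nat (if e \<le> m then (m - e + d + 1) choose (d + 1) else 0)"
      using L'[OF m] unfolding Ee ibinom_eval by simp
    also have "\<dots> = of_nat (((m + d + 1) choose (d + 1)) - (if e \<le> m then (m - e + d + 1) choose (d + 1) else 0))"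
      using le by (simp only: of_nat_diff)
    finally show ?thesis by (simp only: of_nat_eq_iff)
  qed
  have h1: "hilbert_fun n I 1 \<le> d + 2" using Hn[of 1] by simp
  have rdim: "r \<le> V.dim (I \<inter> graded_part n 1)"
    using dimR[of 1] h1 dim_graded1[of n, where 'a='a] dn by (simp add: r_def)
  obtain B1 where B1: "B1 \<subseteq> I \<inter> graded_part n 1" "V.independent B1" "I \<inter> graded_part n 1 \<subseteq> V.span B1"
    "card B1 = V.dim (I \<inter> graded_part n 1)"
    by (rule V.basis_exists)
  have fB1: "finite B1"
  proof -
    have "B1 \<subseteq> V.span (Xv ` {..n})" using B1(1) graded1_span by blast
    then show ?thesis using V.independent_span_bound[OF _ B1(2)] by blast
  qed
  obtain C where C: "C \<subseteq> B1" "card C = r" "finite C"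
    using obtain_subset_with_card_n[of r B1] rdim B1(4) by auto
  obtain u where ub: "bij_betw u {0..<card C} C" using ex_bij_betw_nat_finite[OF C(3)] by blast
  have ub': "bij_betw u {..<r} C" using ub C(2) by (simp add: atLeast0LessThan)
  have uC: "u ` {..<r} = C" using ub' by (simp add: bij_betw_def)
  have uinj: "inj_on u {..<r}" using ub' by (simp add: bij_betw_def)
  have Cind: "V.independent C" using V.independent_mono[OF B1(2) C(1)] .
  have ulin: "lin_indep_linear_forms n r u"
    unfolding lin_indep_linear_forms_def
  proof (intro conjI allI impI)
    fix i assume "i < r"
    then show "u i \<in> graded_part n 1" using uC C(1) B1(1) by blast
  next
    fix c :: "nat \<Rightarrow> 'a" and i
    assume s: "(\<Sum>i<r. msmult (c i) (u i)) = 0" and i: "i < r"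
    define w where "w v = c (the_inv_into {..<r} u v)" for v
    have "(\<Sum>v\<in>C. msmult (w v) v) = (\<Sum>j<r. msmult (w (u j)) (u j))"
      unfolding uC[symmetric] using sum.reindex[OF uinj, of "\<lambda>v. msmult (w v) v"] by (simp add: comp_def)
    also have "\<dots> = (\<Sum>j<r. msmult (c j) (u j))"
      by (intro sum.cong refl) (simp add: w_def the_inv_into_f_f[OF uinj])
    finally have "(\<Sum>v\<in>C. msmult (w v) v) = 0" using s by simp
    then have "w (u i) = 0" using V.independentD[OF Cind C(3) order_refl] i uC by blast
    then show "c i = 0" using i by (simp add: w_def the_inv_into_f_f[OF uinj])
  qed
  obtain Q and \<tau> :: "nat \<Rightarrow> 'a mpoly" where Q: "Q \<subseteq> {..n}" "card Q + r = n + 1"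
    "\<forall>i\<le>n. \<tau> i \<in> GQ Q 1" "\<forall>i\<in>Q. \<tau> i = Xv i"
    "gen_ideal n (u ` {..<r}) = {p \<in> polys n. subst \<tau> p = 0}"
    by (rule decomposition'[OF ulin])
  interpret decomp n Q \<tau> by unfold_locales (use Q in auto)
  have cQ: "card Q = d + 2" using Q(2) dn by (simp add: r_def)
  let ?U = "u ` {..<r}"
  have JU: "gen_ideal n ?U = Jk" using Q(5) by (simp add: Jk_def)
  have UI: "?U \<subseteq> I" using uC C(1) B1(1) by blast
  have Upolys: "?U \<subseteq> polys n" using UI Ipolys by blast
  have JI: "Jk \<subseteq> I" using gen_ideal_min[OF Iid UI] JU by simp
  have fQ: "finite Q" using Qn finite_subset by blast
  have dJ: "V.dim (graded_part n m :: 'a mpoly set) = V.dim (Jk \<inter> graded_part n m) + ((m + d + 1) choose (d + 1))" for m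
    using dim_Jk[of m] dim_GQ_d[OF fQ cQ, of m, where 'a='a] by simp
  have Ce: "(e + d + 1) choose (d + 1) \<ge> 1" by (simp add: Suc_leI)
  have dimIe: "V.dim (I \<inter> graded_part n e) = V.dim (Jk \<inter> graded_part n e) + 1"
    using dimR[of e] Hn[OF e1] dJ[of e] Ce by simp
  obtain f where fI: "f \<in> I" and fR: "f \<in> graded_part n e" and fJ: "f \<notin> Jk"
  proof -
    have "\<not> (I \<inter> graded_part n e \<subseteq> Jk)"
    proof
      assume sub: "I \<inter> graded_part n e \<subseteq> Jk"
      obtain W :: "'a mpoly set" where W: "finite W" "graded_part n e \<subseteq> V.span W" by (rule graded_fin')
      have "V.dim (I \<inter> graded_part n e) \<le> V.dim (Jk \<inter> graded_part n e)"
      proof (rule V.dim_le_fd[OF W(1)])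
        show "Jk \<inter> graded_part n e \<subseteq> V.span W" using W(2) by blast
        show "I \<inter> graded_part n e \<subseteq> V.span (Jk \<inter> graded_part n e)" using sub V.span_superset by blast
      qed
      then show False using dimIe by simp
    qed
    then show ?thesis using that by blast
  qed
  have fp: "f \<in> polys n" using fR by (simp add: graded_part_def)
  define K where "K = gen_ideal n (insert f ?U)"
  have fU: "insert f ?U \<subseteq> polys n" using Upolys fp by blast
  have Kid: "is_ideal n K" unfolding K_def by (rule gen_ideal_ideal[OF fU])
  have KI: "K \<subseteq> I" unfolding K_def by (rule gen_ideal_min[OF Iid]) (use fI UI in blast)
  have KK: "K = {p \<in> polys n. \<exists>h\<in>PQ Q. subst \<tau> p = subst \<tau> f * h}"
    unfolding K_def by (rule K_char[OF Upolys JU fp])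
  have IK_m: "I \<inter> graded_part n m \<subseteq> K" for m
  proof (cases "m = 0")
    case True
    show ?thesis
    proof
      fix p assume p: "p \<in> I \<inter> graded_part n m"
      then have pc: "p = mconst (lk p 0)" using graded0 True by blast
      have "lk p 0 = 0"
      proof (rule ccontr)
        assume "lk p 0 \<noteq> 0"
        moreover have "mconst (lk p 0) \<in> I" using p pc by simp
        ultimately have "\<forall>i\<le>n. Xv i \<in> I" using const_in_ideal[OF Iid] by blast
        with noall show False by blast
      qed
      then have "p = 0" using pc by (simp add: mconst_def)
      then show "p \<in> K" using ideal_0[OF Kid] by simp
    qed
  next
    case False
    then have m1: "m \<ge> 1" by simp
    have le: "(if e \<le> m then (m - e + d + 1) choose (d + 1) else 0) \<le> (m + d + 1) choose (d + 1)"
      using binomial_right_mono[of "m - e + d + 1" "m + d + 1" "d + 1"] by auto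
    have dK: "V.dim (K \<inter> graded_part n m) + ((m + d + 1) choose (d + 1))
        = (if e \<le> m then (m - e + d + 1) choose (d + 1) else 0) + V.dim (graded_part n m :: 'a mpoly set)"
      by (rule hilbert_from_decomp(2)[OF decomp_axioms cQ fR fJ KK])
    have dI: "V.dim (I \<inter> graded_part n m) + ((m + d + 1) choose (d + 1))
        = (if e \<le> m then (m - e + d + 1) choose (d + 1) else 0) + V.dim (graded_part n m :: 'a mpoly set)"
      using dimR[of m] Hn[OF m1] le by simp
    obtain W :: "'a mpoly set" where W: "finite W" "graded_part n m \<subseteq> V.span W" by (rule graded_fin')
    have "I \<inter> graded_part n m \<subseteq> K \<inter> graded_part n m"
    proof (rule V.subspace_eq_dim[OF W(1)])
      show "I \<inter> graded_part n m \<subseteq> V.span W" using W(2) by blast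
      show "V.subspace (K \<inter> graded_part n m)" by (intro V.subspace_inter ideal_subspace[OF Kid] graded_subspace')
      show "K \<inter> graded_part n m \<subseteq> I \<inter> graded_part n m" using KI by blast
      show "V.dim (I \<inter> graded_part n m) \<le> V.dim (K \<inter> graded_part n m)" using dK dI by simp
    qed
    then show ?thesis by blast
  qed
  have "I \<subseteq> K"
  proof
    fix p assume p: "p \<in> I"
    have pp: "p \<in> PQ {..n}" using p Ipolys by (auto simp: polys_PQ)
    have "p = (\<Sum>k\<in>mon_deg ` ks p. hcomp k p)" by (rule hcomp_decomp) auto
    also have "\<dots> \<in> K"
    proof (rule ideal_sum[OF Kid])
      fix k assume "k \<in> mon_deg ` ks p"
      have "hcomp k p \<in> I" using Ih[OF p] .
      moreover have "hcomp k p \<in> graded_part n k" using hcomp_PQ[OF pp] by (simp add: graded_GQ)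
      ultimately show "hcomp k p \<in> K" using IK_m[of k] by blast
    qed
    finally show "p \<in> K" .
  qed
  then have IeqK: "I = K" using KI by blast
  have fh: "homogeneous f" using fR by (auto simp: graded_part_def homogeneous_def)
  have fnot: "f \<notin> gen_ideal n ?U" using fJ JU by simp
  show ?thesis
    using ulin fp fh fnot IeqK unfolding K_def r_def by blast
qed


theorem proposition2p6:
  fixes n d :: nat and I :: "('a::field) mpoly set" and \<phi> :: "'a \<Rightarrow> 'b::field"
  assumes "is_alg_closure \<phi>"
    and "homogeneous_ideal n I"
    and "has_proj_dim n \<phi> I d"
    and "d < n"
  shows "(\<forall>m\<ge>1. of_nat (hilbert_fun n I m)
            = ibinom (of_nat (m + d + 1)) (d + 1)
              - ibinom (of_nat m - ideal_degree n I d + of_nat d + 1) (d + 1))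
    \<longleftrightarrow> (\<exists>u f. lin_indep_linear_forms n (n - d - 1) u
            \<and> f \<in> polys n \<and> homogeneous f
            \<and> f \<notin> gen_ideal n (u ` {..<n - d - 1})
            \<and> I = gen_ideal n (insert f (u ` {..<n - d - 1})))"
proof -
  have noall: "\<not> (\<forall>i\<le>n. Xv i \<in> I)" by (rule no_all_vars[OF assms(1) assms(3)])
  show ?thesis
  proof
    assume L: "\<forall>m\<ge>1. of_nat (hilbert_fun n I m)
            = ibinom (of_nat (m + d + 1)) (d + 1)
              - ibinom (of_nat m - ideal_degree n I d + of_nat d + 1) (d + 1)"
    show "\<exists>u f. lin_indep_linear_forms n (n - d - 1) u
            \<and> f \<in> polys n \<and> homogeneous f
            \<and> f \<notin> gen_ideal n (u ` {..<n - d - 1})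
            \<and> I = gen_ideal n (insert f (u ` {..<n - d - 1}))"
      by (rule lhs_to_rhs[OF assms(2) noall assms(4) L])
  next
    assume "\<exists>u f. lin_indep_linear_forms n (n - d - 1) u
            \<and> f \<in> polys n \<and> homogeneous f
            \<and> f \<notin> gen_ideal n (u ` {..<n - d - 1})
            \<and> I = gen_ideal n (insert f (u ` {..<n - d - 1}))"
    then obtain u f where uf: "lin_indep_linear_forms n (n - d - 1) u" "f \<in> polys n" "homogeneous f"
      "f \<notin> gen_ideal n (u ` {..<n - d - 1})" "I = gen_ideal n (insert f (u ` {..<n - d - 1}))"
      by blast
    show "\<forall>m\<ge>1. of_nat (hilbert_fun n I m)
            = ibinom (of_nat (m + d + 1)) (d + 1)
              - ibinom (of_nat m - ideal_degree n I d + of_nat d + 1) (d + 1)"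
      by (rule rhs_to_lhs[OF noall assms(4) uf])
  qed
qed

end
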